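(* Let $\pi$ be a set of primes, $G$ a group and $G_0$ a subgroup of finite index in $G$. Let $A$ be a $\mathbb ZG$-module that is a $\mathbb ZG_0$-module quotient of some $\mathbb ZG_0$-module whose underlying abelian group is torsion-free of finite rank and $\pi$-spectral. Then $A$ is a $\mathbb ZG$-module quotient of some $\mathbb ZG$-module whose underlying abelian group is torsion-free of finite rank and $\pi$-spectral.
   Context: An abelian group has finite rank if its torsion-free rank and all $p$-ranks are finite; it is $\pi$-spectral if every prime $p$ for which it has a section isomorphic to $\mathbb Z_{p^\infty}$ lies in $\pi$. *)

theory Defs
  imports "HOL-Algebra.Algebra" "HOL-Computational_Algebra.Primes"
begin

text \<open>A (left) ZG-module: an abelian group M (written multiplicatively, as a HOL-Algebra
  structure) together with an action of the group G on M by group automorphisms.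
  This is the same as a module over the integral group ring ZG.\<close>

definition G_module :: "('g, 'c) monoid_scheme \<Rightarrow> ('m, 'd) monoid_scheme \<Rightarrow> ('g \<Rightarrow> 'm \<Rightarrow> 'm) \<Rightarrow> bool" where
  "G_module G M act \<longleftrightarrow>
     group G \<and> comm_group M \<and>
     (\<forall>g\<in>carrier G. \<forall>x\<in>carrier M. act g x \<in> carrier M) \<and>
     (\<forall>g\<in>carrier G. \<forall>x\<in>carrier M. \<forall>y\<in>carrier M. act g (x \<otimes>\<^bsub>M\<^esub> y) = act g x \<otimes>\<^bsub>M\<^esub> act g y) \<and>
     (\<forall>x\<in>carrier M. act \<one>\<^bsub>G\<^esub> x = x) \<and>
     (\<forall>g\<in>carrier G. \<forall>h\<in>carrier G. \<forall>x\<in>carrier M. act (g \<otimes>\<^bsub>G\<^esub> h) x = act g (act h x))"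

text \<open>A surjective module homomorphism (with respect to the group elements in S):
  witnesses that A is a module quotient of M.\<close>

definition module_epi :: "'g set \<Rightarrow> ('m, 'd) monoid_scheme \<Rightarrow> ('g \<Rightarrow> 'm \<Rightarrow> 'm)
    \<Rightarrow> ('a, 'e) monoid_scheme \<Rightarrow> ('g \<Rightarrow> 'a \<Rightarrow> 'a) \<Rightarrow> ('m \<Rightarrow> 'a) \<Rightarrow> bool" where
  "module_epi S M actM A actA f \<longleftrightarrow>
     f \<in> hom M A \<and> f ` carrier M = carrier A \<and>
     (\<forall>g\<in>S. \<forall>x\<in>carrier M. f (actM g x) = actA g (f x))"

definition torsion_free :: "('m, 'd) monoid_scheme \<Rightarrow> bool" where
  "torsion_free M \<longleftrightarrow>
     (\<forall>x\<in>carrier M. \<forall>n::nat. n > 0 \<and> x [^]\<^bsub>M\<^esub> n = \<one>\<^bsub>M\<^esub> \<longrightarrow> x = \<one>\<^bsub>M\<^esub>)"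

definition Z_independent :: "('m, 'd) monoid_scheme \<Rightarrow> 'm set \<Rightarrow> bool" where
  "Z_independent M S \<longleftrightarrow> S \<subseteq> carrier M \<and>
     (\<forall>T (c :: 'm \<Rightarrow> int). finite T \<and> T \<subseteq> S \<and>
        finprod M (\<lambda>x. x [^]\<^bsub>M\<^esub> c x) T = \<one>\<^bsub>M\<^esub> \<longrightarrow> (\<forall>x\<in>T. c x = 0))"

definition finite_torsion_free_rank :: "('m, 'd) monoid_scheme \<Rightarrow> bool" where
  "finite_torsion_free_rank M \<longleftrightarrow>
     (\<exists>n::nat. \<forall>S. Z_independent M S \<longrightarrow> finite S \<and> card S \<le> n)"

text \<open>Finite p-rank: the elementary abelian subgroup of elements of order dividing p
  (an F_p-vector space whose dimension is the p-rank) is finite.\<close>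
definition finite_p_rank :: "('m, 'd) monoid_scheme \<Rightarrow> nat \<Rightarrow> bool" where
  "finite_p_rank M p \<longleftrightarrow> finite {x \<in> carrier M. x [^]\<^bsub>M\<^esub> p = \<one>\<^bsub>M\<^esub>}"

definition finite_rank :: "('m, 'd) monoid_scheme \<Rightarrow> bool" where
  "finite_rank M \<longleftrightarrow> finite_torsion_free_rank M \<and> (\<forall>p::nat. Factorial_Ring.prime p \<longrightarrow> finite_p_rank M p)"

text \<open>The Pruefer p-group Z_{p^\<infinity>} = Z[1/p]/Z, realised as the rationals in [0,1)
  with p-power denominators under addition modulo 1.\<close>
definition prufer :: "nat \<Rightarrow> rat monoid" where
  "prufer p = \<lparr> carrier = {q::rat. 0 \<le> q \<and> q < 1 \<and> (\<exists>k::nat. q * of_nat (p ^ k) \<in> \<int>)},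
               monoid.mult = (\<lambda>x y. frac (x + y)),
               one = 0 \<rparr>"

definition has_prufer_section :: "('m, 'd) monoid_scheme \<Rightarrow> nat \<Rightarrow> bool" where
  "has_prufer_section M p \<longleftrightarrow>
     (\<exists>H K. subgroup H M \<and> subgroup K M \<and> K \<subseteq> H \<and>
        ((M\<lparr>carrier := H\<rparr>) Mod K) \<cong> prufer p)"

definition pi_spectral :: "nat set \<Rightarrow> ('m, 'd) monoid_scheme \<Rightarrow> bool" where
  "pi_spectral \<pi> M \<longleftrightarrow> (\<forall>p::nat. Factorial_Ring.prime p \<and> has_prufer_section M p \<longrightarrow> p \<in> \<pi>)"

end

theory Submission
  imports Defs
begin

lemma prufer_carrier:
  "x \<in> carrier (prufer p) \<longleftrightarrow> 0 \<le> x \<and> x < 1 \<and> (\<exists>k. x * of_nat (p ^ k) \<in> \<int>)"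
  by (simp add: prufer_def)

lemma prufer_mult [simp]: "x \<otimes>\<^bsub>prufer p\<^esub> y = frac (x + y)"
  by (simp add: prufer_def)

lemma prufer_one [simp]: "\<one>\<^bsub>prufer p\<^esub> = 0"
  by (simp add: prufer_def)

lemma Ints_mult_pow_mono:
  assumes "(x::rat) * of_nat (p ^ k) \<in> \<int>" "k \<le> m"
  shows "x * of_nat (p ^ m) \<in> \<int>"
proof -
  have "p ^ m = p ^ k * p ^ (m - k)" using assms(2) by (simp flip: power_add)
  hence "x * of_nat (p ^ m) = (x * of_nat (p ^ k)) * of_nat (p ^ (m - k))" by simp
  thus ?thesis using assms(1) by (metis Ints_mult Ints_of_nat)
qed

lemma frac_mult_Ints:
  assumes "(z::rat) * c \<in> \<int>" "c \<in> \<int>"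
  shows "frac z * c \<in> \<int>"
proof -
  have "frac z * c = z * c - of_int \<lfloor>z\<rfloor> * c" by (simp add: frac_def algebra_simps)
  thus ?thesis using assms by (metis Ints_diff Ints_mult Ints_of_int)
qed

lemma prufer_frac_closed:
  assumes "(z::rat) * of_nat (p ^ k) \<in> \<int>"
  shows "frac z \<in> carrier (prufer p)"
  using frac_mult_Ints[OF assms] frac_lt_1 frac_ge_0 unfolding prufer_carrier
  by (metis Ints_of_nat)

lemma prufer_comm_group: "comm_group (prufer p)"
proof (rule comm_groupI)
  fix x y assume x: "x \<in> carrier (prufer p)" and y: "y \<in> carrier (prufer p)"
  then obtain k1 k2 where k1: "x * of_nat (p ^ k1) \<in> \<int>" and k2: "y * of_nat (p ^ k2) \<in> \<int>"
    by (auto simp: prufer_carrier)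
  have "x * of_nat (p ^ (k1+k2)) \<in> \<int>" "y * of_nat (p ^ (k1+k2)) \<in> \<int>"
    using Ints_mult_pow_mono k1 k2 by auto
  hence "(x + y) * of_nat (p ^ (k1+k2)) \<in> \<int>" by (simp add: distrib_right)
  thus "x \<otimes>\<^bsub>prufer p\<^esub> y \<in> carrier (prufer p)" using prufer_frac_closed by simp
next
  show "\<one>\<^bsub>prufer p\<^esub> \<in> carrier (prufer p)" by (auto simp: prufer_carrier intro: exI[of _ 0])
next
  fix x y z :: rat
  show "x \<otimes>\<^bsub>prufer p\<^esub> y \<otimes>\<^bsub>prufer p\<^esub> z = x \<otimes>\<^bsub>prufer p\<^esub> (y \<otimes>\<^bsub>prufer p\<^esub> z)"
    by (simp add: add.assoc)
next
  fix x y :: rat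
  show "x \<otimes>\<^bsub>prufer p\<^esub> y = y \<otimes>\<^bsub>prufer p\<^esub> x" by (simp add: add.commute)
next
  fix x assume x: "x \<in> carrier (prufer p)"
  then show "\<one>\<^bsub>prufer p\<^esub> \<otimes>\<^bsub>prufer p\<^esub> x = x" by (simp add: prufer_carrier)
next
  fix x assume x: "x \<in> carrier (prufer p)"
  then obtain k where k: "x * of_nat (p ^ k) \<in> \<int>" by (auto simp: prufer_carrier)
  hence "(- x) * of_nat (p ^ k) \<in> \<int>" by (metis Ints_minus minus_mult_left)
  hence "frac (- x) \<in> carrier (prufer p)" by (rule prufer_frac_closed)
  moreover have "frac (- x) \<otimes>\<^bsub>prufer p\<^esub> x = \<one>\<^bsub>prufer p\<^esub>" by simp
  ultimately show "\<exists>y\<in>carrier (prufer p). y \<otimes>\<^bsub>prufer p\<^esub> x = \<one>\<^bsub>prufer p\<^esub>" by blast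
qed

lemma prufer_pow:
  assumes "x \<in> carrier (prufer p)"
  shows "x [^]\<^bsub>prufer p\<^esub> (n::nat) = frac (of_nat n * x)"
proof (induction n)
  case 0 then show ?case by simp
next
  case (Suc n)
  then show ?case by (simp add: algebra_simps)
qed

lemma frac_nat_mult_frac: "frac (of_nat c * frac (z::rat)) = frac (of_nat c * z)"
proof -
  have "of_nat c * frac z = of_nat c * z + of_int (- (int c * \<lfloor>z\<rfloor>))"
    by (simp add: frac_def algebra_simps)
  then show ?thesis by (simp only: frac_add_of_int_right)
qed

definition pmul :: "nat \<Rightarrow> rat \<Rightarrow> rat" where
  "pmul c x = frac (of_nat c * x)"

lemma pmul_hom: "pmul c \<in> hom (prufer p) (prufer p)"
proof (rule homI)
  fix x assume x: "x \<in> carrier (prufer p)"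
  then obtain k where k: "x * of_nat (p ^ k) \<in> \<int>" by (auto simp: prufer_carrier)
  hence "(of_nat c * x) * of_nat (p ^ k) \<in> \<int>"
    by (metis Ints_mult Ints_of_nat mult.assoc)
  thus "pmul c x \<in> carrier (prufer p)" unfolding pmul_def by (rule prufer_frac_closed)
next
  fix x y assume "x \<in> carrier (prufer p)" "y \<in> carrier (prufer p)"
  have "pmul c (frac (x + y)) = frac (of_nat c * (x + y))"
    unfolding pmul_def by (rule frac_nat_mult_frac)
  also have "\<dots> = frac (frac (of_nat c * x) + frac (of_nat c * y))"
    by (simp add: algebra_simps)
  finally show "pmul c (x \<otimes>\<^bsub>prufer p\<^esub> y) = pmul c x \<otimes>\<^bsub>prufer p\<^esub> pmul c y"
    by (simp add: pmul_def)
qed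

lemma pmul_surj:
  assumes "p > 0"
  shows "pmul (p ^ j) ` carrier (prufer p) = carrier (prufer p)"
proof
  show "pmul (p ^ j) ` carrier (prufer p) \<subseteq> carrier (prufer p)"
    using pmul_hom by (auto simp: hom_def)
next
  show "carrier (prufer p) \<subseteq> pmul (p ^ j) ` carrier (prufer p)"
  proof
    fix y assume y: "y \<in> carrier (prufer p)"
    then obtain k where k: "y * of_nat (p ^ k) \<in> \<int>" and y01: "0 \<le> y" "y < 1"
      by (auto simp: prufer_carrier)
    have pj: "(of_nat (p ^ j) :: rat) \<ge> 1" using assms by simp
    define x where "x = y / of_nat (p ^ j)"
    have "0 \<le> x" using y01 pj by (simp add: x_def)
    moreover have "x < 1" using y01 pj unfolding x_def
      by (simp add: divide_less_eq)
    moreover have "x * of_nat (p ^ (k + j)) \<in> \<int>"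
    proof -
      have "x * of_nat (p ^ (k + j)) = y * of_nat (p ^ k)"
        using pj assms unfolding x_def by (simp add: power_add)
      thus ?thesis using k by simp
    qed
    ultimately have "x \<in> carrier (prufer p)" unfolding prufer_carrier by blast
    moreover have "pmul (p ^ j) x = y"
      using pj y01 assms unfolding pmul_def x_def by simp
    ultimately show "y \<in> pmul (p ^ j) ` carrier (prufer p)" by (metis image_eqI)
  qed
qed


lemma prufer_hit:
  assumes p: "Factorial_Ring.prime (p::nat)"
    and b: "b \<in> carrier (prufer p)" and bk: "b * of_nat (p ^ k) \<notin> \<int>"
    and y: "y \<in> carrier (prufer p)" and yk: "y * of_nat (p ^ k) \<in> \<int>"
  shows "\<exists>n::nat. frac (of_nat n * b) = y"
proof -
  have p0: "p > 0" using p prime_gt_0_nat by blast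
  define m where "m = (LEAST m. b * of_nat (p ^ m) \<in> \<int>)"
  have ex: "\<exists>m. b * of_nat (p ^ m) \<in> \<int>" using b by (auto simp: prufer_carrier)
  have bm: "b * of_nat (p ^ m) \<in> \<int>" unfolding m_def using ex by (rule LeastI_ex)
  have mmin: "\<And>m'. m' < m \<Longrightarrow> b * of_nat (p ^ m') \<notin> \<int>"
    unfolding m_def using not_less_Least by blast
  have km: "k < m"
  proof (rule ccontr)
    assume "\<not> k < m" hence "m \<le> k" by simp
    with bm have "b * of_nat (p ^ k) \<in> \<int>" by (rule Ints_mult_pow_mono)
    with bk show False by simp
  qed
  from bm obtain a where a: "b * of_nat (p ^ m) = of_int a" by (auto elim: Ints_cases)
  have ndvd: "\<not> int p dvd a"
  proof
    assume "int p dvd a"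
    then obtain a' where a': "a = int p * a'" by (auto elim: dvdE)
    obtain m' where m': "m = Suc m'" using km by (cases m) auto
    have "b * of_nat (p ^ m') * of_nat p = of_int a' * of_nat p"
      using a a' m' by (simp add: algebra_simps)
    hence "b * of_nat (p ^ m') = of_int a'" using p0 by simp
    hence "b * of_nat (p ^ m') \<in> \<int>" by simp
    with mmin[of m'] m' show False by simp
  qed
  have cop: "coprime a (int p ^ m)" using p ndvd
    by (metis prime_nat_int_transfer prime_imp_power_coprime)
  have g1: "gcd a (int p ^ m) = 1" using cop by (rule coprime_imp_gcd_eq_1)
  obtain u v where "u * a + v * (int p ^ m) = gcd a (int p ^ m)"
    using bezout_int by blast
  with g1 have uv: "u * a + v * (int p ^ m) = 1" by simp
  have "y * of_nat (p ^ m) \<in> \<int>" using Ints_mult_pow_mono[OF yk] km by simp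
  then obtain d where d: "y * of_nat (p ^ m) = of_int d" by (auto elim: Ints_cases)
  define P where "P = int p ^ m"
  have P0: "P > 0" using p0 by (simp add: P_def)
  define r where "r = (u * d) mod P"
  have r0: "r \<ge> 0" using P0 by (simp add: r_def)
  define w where "w = - (d * v + ((u * d) div P) * a)"
  have ra: "r * a = d + P * w"
  proof -
    have r: "r = u * d - P * ((u * d) div P)" by (simp add: r_def minus_div_mult_eq_mod [symmetric] algebra_simps)
    have "r * a = d * (u * a) - P * ((u * d) div P) * a" unfolding r by (simp add: algebra_simps)
    also have "u * a = 1 - v * P" using uv by (simp add: P_def)
    finally show ?thesis by (simp add: w_def algebra_simps)
  qed
  have Pq: "(of_int P :: rat) = of_nat (p ^ m)" by (simp add: P_def)
  have pm: "(of_nat (p ^ m) :: rat) > 0" using p0 by simp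
  have bq: "b = of_int a / of_int P" unfolding Pq using a pm by (simp add: eq_divide_eq)
  have yq: "y = of_int d / of_int P" unfolding Pq using d pm by (simp add: eq_divide_eq)
  have "of_nat (nat r) * b = of_int (r * a) / of_int P" using r0 bq by simp
  also have "\<dots> = y + of_int w" using ra yq P0 by (simp add: field_simps)
  finally have "frac (of_nat (nat r) * b) = frac y" by simp
  also have "\<dots> = y" using y by (simp add: prufer_carrier)
  finally show ?thesis by blast
qed

lemma prufer_bounded:
  assumes p: "Factorial_Ring.prime (p::nat)"
    and B: "B \<subseteq> carrier (prufer p)"
    and cl: "\<And>x n. x \<in> B \<Longrightarrow> frac (of_nat n * x) \<in> B"
    and nb: "\<not> (\<exists>j. \<forall>b\<in>B. b * of_nat (p ^ j) \<in> \<int>)"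
  shows "B = carrier (prufer p)"
proof
  show "carrier (prufer p) \<subseteq> B"
  proof
    fix y assume y: "y \<in> carrier (prufer p)"
    then obtain k where yk: "y * of_nat (p ^ k) \<in> \<int>" by (auto simp: prufer_carrier)
    from nb obtain b where b: "b \<in> B" "b * of_nat (p ^ k) \<notin> \<int>" by blast
    from prufer_hit[OF p _ b(2) y yk] b B obtain n where "frac (of_nat n * b) = y" by blast
    with cl[OF b(1)] show "y \<in> B" by metis
  qed
qed (rule B)


definition psec :: "('m, 'd) monoid_scheme \<Rightarrow> 'm set \<Rightarrow> nat \<Rightarrow> bool" where
  "psec Xg Sg p \<longleftrightarrow> (\<exists>Hs qs. subgroup Hs Xg \<and> Hs \<subseteq> Sg \<and> qs \<in> hom (Xg\<lparr>carrier := Hs\<rparr>) (prufer p)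
      \<and> qs ` Hs = carrier (prufer p))"

lemma subgroup_comm_group:
  assumes "comm_group Xg" "subgroup H Xg"
  shows "comm_group (Xg\<lparr>carrier := H\<rparr>)"
proof -
  interpret comm_group Xg by fact
  have g: "group (Xg\<lparr>carrier := H\<rparr>)" using assms(2) by (rule subgroup.subgroup_is_group) (rule is_group)
  show ?thesis
    apply (rule group.group_comm_groupI[OF g])
    using assms(2) by (auto intro: m_comm dest: subgroup.mem_carrier)
qed

lemma sec_to_psec:
  assumes Xg: "comm_group Xg" and s: "has_prufer_section Xg p"
  shows "psec Xg (carrier Xg) p"
proof -
  interpret Xg: comm_group Xg by fact
  from s obtain H K where H: "subgroup H Xg" and K: "subgroup K Xg" and KH: "K \<subseteq> H"
    and iso: "((Xg\<lparr>carrier := H\<rparr>) Mod K) \<cong> prufer p"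
    unfolding has_prufer_section_def by blast
  from iso obtain \<phi> where \<phi>: "\<phi> \<in> iso ((Xg\<lparr>carrier := H\<rparr>) Mod K) (prufer p)"
    unfolding is_iso_def by blast
  define XHg where "XHg = Xg\<lparr>carrier := H\<rparr>"
  have cXH: "comm_group XHg" unfolding XHg_def using subgroup_comm_group[OF Xg H] .
  interpret XHg: comm_group XHg by (rule cXH)
  have KXH: "subgroup K XHg" unfolding XHg_def using Xg.subgroup_incl[OF K H KH] .
  interpret N: normal K XHg using XHg.subgroup_imp_normal[OF KXH] .
  define q where "q = (\<lambda>x. \<phi> (K #>\<^bsub>XHg\<^esub> x))"
  have cH: "carrier XHg = H" by (simp add: XHg_def)
  have hom\<phi>: "\<phi> \<in> hom (XHg Mod K) (prufer p)" using \<phi> unfolding XHg_def iso_def by blast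
  have "q \<in> hom XHg (prufer p)"
  proof (rule homI)
    fix x assume "x \<in> carrier XHg"
    hence "K #>\<^bsub>XHg\<^esub> x \<in> carrier (XHg Mod K)" by (auto simp: FactGroup_def RCOSETS_def)
    thus "q x \<in> carrier (prufer p)" unfolding q_def using hom\<phi> by (auto simp: hom_def)
  next
    fix x y assume xy: "x \<in> carrier XHg" "y \<in> carrier XHg"
    hence m: "K #>\<^bsub>XHg\<^esub> x \<in> carrier (XHg Mod K)" "K #>\<^bsub>XHg\<^esub> y \<in> carrier (XHg Mod K)"
      by (auto simp: FactGroup_def RCOSETS_def)
    have "q (x \<otimes>\<^bsub>XHg\<^esub> y) = \<phi> ((K #>\<^bsub>XHg\<^esub> x) \<otimes>\<^bsub>XHg Mod K\<^esub> (K #>\<^bsub>XHg\<^esub> y))"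
      unfolding q_def using N.rcos_sum[OF xy] by (simp add: FactGroup_def)
    also have "\<dots> = q x \<otimes>\<^bsub>prufer p\<^esub> q y" unfolding q_def using hom_mult[OF hom\<phi> m] by (simp add: FactGroup_def)
    finally show "q (x \<otimes>\<^bsub>XHg\<^esub> y) = q x \<otimes>\<^bsub>prufer p\<^esub> q y" .
  qed
  moreover have "q ` H = carrier (prufer p)"
  proof -
    have "(\<lambda>x. K #>\<^bsub>XHg\<^esub> x) ` H = carrier (XHg Mod K)"
      using cH by (auto simp: FactGroup_def RCOSETS_def)
    hence "q ` H = \<phi> ` carrier (XHg Mod K)" unfolding q_def by (metis image_image)
    also have "\<dots> = carrier (prufer p)" using \<phi> unfolding XHg_def iso_def bij_betw_def by blast
    finally show ?thesis .
  qed
  ultimately show ?thesis unfolding psec_def XHg_def using H subgroup.subset[OF H] by blast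
qed

lemma psec_to_sec:
  assumes Xg: "comm_group Xg" and s: "psec Xg S p"
  shows "has_prufer_section Xg p"
proof -
  interpret Xg: comm_group Xg by fact
  from s obtain H q where H: "subgroup H Xg" and q: "q \<in> hom (Xg\<lparr>carrier := H\<rparr>) (prufer p)"
    and qs: "q ` H = carrier (prufer p)" unfolding psec_def by blast
  define XHg where "XHg = Xg\<lparr>carrier := H\<rparr>"
  have gXH: "group XHg" unfolding XHg_def using subgroup.subgroup_is_group[OF H Xg.is_group] .
  have gP: "group (prufer p)" using prufer_comm_group comm_group.axioms(2) by blast
  have gh: "group_hom XHg (prufer p) q"
    using gXH gP q unfolding group_hom_def group_hom_axioms_def XHg_def by blast
  have iso: "(XHg Mod kernel XHg (prufer p) q) \<cong> prufer p"
    using group_hom.FactGroup_iso[OF gh] qs by (simp add: XHg_def)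
  have KXH: "subgroup (kernel XHg (prufer p) q) XHg" using group_hom.subgroup_kernel[OF gh] .
  have K: "subgroup (kernel XHg (prufer p) q) Xg"
    using Xg.incl_subgroup[OF H] KXH unfolding XHg_def by blast
  have KH: "kernel XHg (prufer p) q \<subseteq> H" by (auto simp: kernel_def XHg_def)
  show ?thesis unfolding has_prufer_section_def using H K KH iso unfolding XHg_def by blast
qed

lemma prufer_nontrivial:
  assumes "p > 1"
  shows "\<exists>x\<in>carrier (prufer p). x \<noteq> 0"
proof -
  have p: "(of_nat p :: rat) > 1" using assms by simp
  have a: "0 \<le> 1 / (of_nat p :: rat)" using p by simp
  have b: "1 / (of_nat p :: rat) < 1" using p by simp
  have c: "1 / (of_nat p :: rat) * of_nat (p ^ 1) \<in> \<int>" using p by simp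
  have "1 / of_nat p \<in> carrier (prufer p)"
    unfolding prufer_carrier using a b c by blast
  moreover have "1 / (of_nat p :: rat) \<noteq> 0" using p by simp
  ultimately show ?thesis by blast
qed


lemma sub_nat_pow_closed:
  assumes "subgroup H G" "x \<in> H"
  shows "x [^]\<^bsub>G\<^esub> (n::nat) \<in> H"
  by (induction n) (use assms in \<open>auto intro: subgroup.m_closed subgroup.one_closed\<close>)

lemma hom_restrict_sub:
  assumes "q \<in> hom (Xg\<lparr>carrier := H\<rparr>) Z" "H' \<subseteq> H"
  shows "q \<in> hom (Xg\<lparr>carrier := H'\<rparr>) Z"
  using assms unfolding hom_def by auto

lemma psec_hom_transfer:
  assumes Xg: "comm_group Xg" and Y: "comm_group Y" and S: "subgroup S Xg"
    and h: "h \<in> hom (Xg\<lparr>carrier := S\<rparr>) Y"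
    and p: "Factorial_Ring.prime p"
    and sec: "psec Xg S p"
  shows "psec Y (carrier Y) p \<or> psec Xg {x\<in>S. h x = \<one>\<^bsub>Y\<^esub>} p"
proof -
  interpret Xg: comm_group Xg by fact
  interpret Y: comm_group Y by fact
  define XS where "XS = Xg\<lparr>carrier := S\<rparr>"
  have gXS: "group XS" unfolding XS_def by (rule subgroup.subgroup_is_group[OF S Xg.is_group])
  interpret hS: group_hom XS Y h
    using gXS Y.is_group h unfolding group_hom_def group_hom_axioms_def XS_def by blast
  have Kr: "{x\<in>S. h x = \<one>\<^bsub>Y\<^esub>} = kernel XS Y h" by (simp add: kernel_def XS_def)
  have subKr: "subgroup {x\<in>S. h x = \<one>\<^bsub>Y\<^esub>} Xg"
    unfolding Kr using Xg.incl_subgroup[OF S] hS.subgroup_kernel unfolding XS_def by blast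
  from sec obtain H q where H: "subgroup H Xg" and HS: "H \<subseteq> S"
    and q: "q \<in> hom (Xg\<lparr>carrier := H\<rparr>) (prufer p)" and qs: "q ` H = carrier (prufer p)"
    unfolding psec_def by blast
  define H' where "H' = {x\<in>H. h x = \<one>\<^bsub>Y\<^esub>}"
  have H'eq: "H' = H \<inter> {x\<in>S. h x = \<one>\<^bsub>Y\<^esub>}" using HS by (auto simp: H'_def)
  have subH': "subgroup H' Xg" unfolding H'eq by (rule Xg.subgroups_Inter_pair[OF H subKr])
  have H'H: "H' \<subseteq> H" by (auto simp: H'_def)
  have qmul: "q (x \<otimes>\<^bsub>Xg\<^esub> y) = frac (q x + q y)" if "x \<in> H" "y \<in> H" for x y
    using hom_mult[OF q, of x y] that by simp
  have qcar: "q x \<in> carrier (prufer p)" if "x \<in> H" for x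
    using q that by (auto simp: hom_def)
  have qpow: "q (x [^]\<^bsub>Xg\<^esub> n) = frac (of_nat n * q x)" if x: "x \<in> H" for x and n :: nat
  proof (induction n)
    case 0
    have "q \<one>\<^bsub>Xg\<^esub> = 0"
    proof -
      have one: "\<one>\<^bsub>Xg\<^esub> \<in> H" using subgroup.one_closed[OF H] .
      have e: "frac (q \<one>\<^bsub>Xg\<^esub> + q \<one>\<^bsub>Xg\<^esub>) = q \<one>\<^bsub>Xg\<^esub>" using qmul[OF one one] by simp
      have b: "0 \<le> q \<one>\<^bsub>Xg\<^esub>" "q \<one>\<^bsub>Xg\<^esub> < 1" using qcar[OF one] by (auto simp: prufer_carrier)
      have "(q \<one>\<^bsub>Xg\<^esub> + q \<one>\<^bsub>Xg\<^esub>) - q \<one>\<^bsub>Xg\<^esub> \<in> \<int>" using e unfolding frac_unique_iff by blast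
      hence "q \<one>\<^bsub>Xg\<^esub> \<in> \<int>" by simp
      hence "frac (q \<one>\<^bsub>Xg\<^esub>) = 0" by simp
      moreover have "frac (q \<one>\<^bsub>Xg\<^esub>) = q \<one>\<^bsub>Xg\<^esub>" using b by (simp add: frac_eq)
      ultimately show ?thesis by simp
    qed
    then show ?case by simp
  next
    case (Suc n)
    have "x [^]\<^bsub>Xg\<^esub> n \<in> H" using x sub_nat_pow_closed[OF H] by blast
    then have "q (x [^]\<^bsub>Xg\<^esub> Suc n) = frac (q (x [^]\<^bsub>Xg\<^esub> n) + q x)" using qmul x by simp
    also have "\<dots> = frac (of_nat (Suc n) * q x)" using Suc by (simp add: algebra_simps)
    finally show ?case .
  qed
  show ?thesis
  proof (cases "\<exists>j. \<forall>b\<in>q ` H'. b * of_nat (p ^ j) \<in> \<int>")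
    case False
    have B: "q ` H' \<subseteq> carrier (prufer p)" using qcar H'H by auto
    have cl: "frac (of_nat n * b) \<in> q ` H'" if bH: "b \<in> q ` H'" for b n
    proof -
      obtain x where x: "x \<in> H'" "b = q x" using bH by blast
      have xS: "x \<in> S" "x \<in> H" using x HS H'H by auto
      have "x [^]\<^bsub>Xg\<^esub> n \<in> H'" using sub_nat_pow_closed[OF subH' x(1)] .
      moreover have "q (x [^]\<^bsub>Xg\<^esub> n) = frac (of_nat n * b)" using qpow[OF xS(2)] x by simp
      ultimately show ?thesis by (metis image_eqI)
    qed
    have "q ` H' = carrier (prufer p)" using prufer_bounded[OF p B cl False] by blast
    moreover have "H' \<subseteq> {x\<in>S. h x = \<one>\<^bsub>Y\<^esub>}" using H'eq by auto
    moreover have "q \<in> hom (Xg\<lparr>carrier := H'\<rparr>) (prufer p)" using hom_restrict_sub[OF q H'H] .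
    ultimately have "psec Xg {x\<in>S. h x = \<one>\<^bsub>Y\<^esub>} p" unfolding psec_def using subH' by blast
    thus ?thesis by blast
  next
    case True
    then obtain j where j: "\<And>b. b \<in> q ` H' \<Longrightarrow> b * of_nat (p ^ j) \<in> \<int>" by blast
    have p0: "p > 0" using p prime_gt_0_nat by blast
    define q2 where "q2 = (\<lambda>x. pmul (p ^ j) (q x))"
    have q2hom: "q2 \<in> hom (Xg\<lparr>carrier := H\<rparr>) (prufer p)"
      unfolding q2_def using hom_compose[OF q pmul_hom] by (simp add: comp_def)
    have q2s: "q2 ` H = carrier (prufer p)"
    proof -
      have "q2 ` H = pmul (p ^ j) ` (q ` H)" unfolding q2_def by (simp add: image_image)
      thus ?thesis using qs pmul_surj[OF p0] by simp
    qed
    have q2mul: "q2 (x \<otimes>\<^bsub>Xg\<^esub> y) = frac (q2 x + q2 y)" if "x \<in> H" "y \<in> H" for x y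
      using hom_mult[OF q2hom, of x y] that by simp
    have q2car: "q2 x \<in> carrier (prufer p)" if "x \<in> H" for x
      using q2hom that by (auto simp: hom_def)
    have q2H': "q2 x = 0" if "x \<in> H'" for x
    proof -
      have "q x * of_nat (p ^ j) \<in> \<int>" using j that by blast
      thus ?thesis unfolding q2_def pmul_def by (simp add: mult.commute)
    qed
    have wd: "q2 x = q2 x'" if x: "x \<in> H" and x': "x' \<in> H" and e: "h x = h x'" for x x'
    proof -
      have xS: "x \<in> S" "x' \<in> S" using x x' HS by auto
      have ix: "inv\<^bsub>Xg\<^esub> x \<in> H" using subgroup.m_inv_closed[OF H x] .
      have d: "x' \<otimes>\<^bsub>Xg\<^esub> inv\<^bsub>Xg\<^esub> x \<in> H" using subgroup.m_closed[OF H x' ix] .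
      have "h (x' \<otimes>\<^bsub>Xg\<^esub> inv\<^bsub>Xg\<^esub> x) = \<one>\<^bsub>Y\<^esub>"
      proof -
        have cS: "carrier XS = S" by (simp add: XS_def)
        have xc: "x \<in> carrier XS" "x' \<in> carrier XS" using xS cS by auto
        have "inv\<^bsub>XS\<^esub> x = inv\<^bsub>Xg\<^esub> x" unfolding XS_def using Xg.m_inv_consistent[OF S xS(1)] .
        moreover have "x' \<otimes>\<^bsub>Xg\<^esub> inv\<^bsub>Xg\<^esub> x = x' \<otimes>\<^bsub>XS\<^esub> inv\<^bsub>XS\<^esub> x" using calculation by (simp add: XS_def)
        moreover have "h (x' \<otimes>\<^bsub>XS\<^esub> inv\<^bsub>XS\<^esub> x) = h x' \<otimes>\<^bsub>Y\<^esub> inv\<^bsub>Y\<^esub> h x"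
          using hS.hom_mult[OF xc(2) hS.G.inv_closed[OF xc(1)]] hS.hom_inv[OF xc(1)] by simp
        moreover have "h x \<in> carrier Y" using xS cS by simp
        ultimately show ?thesis using e by simp
      qed
      hence "x' \<otimes>\<^bsub>Xg\<^esub> inv\<^bsub>Xg\<^esub> x \<in> H'" using d by (simp add: H'_def)
      hence z: "q2 (x' \<otimes>\<^bsub>Xg\<^esub> inv\<^bsub>Xg\<^esub> x) = 0" by (rule q2H')
      have xc: "x \<in> carrier Xg" "x' \<in> carrier Xg" using x x' subgroup.subset[OF H] by auto
      have "x' = (x' \<otimes>\<^bsub>Xg\<^esub> inv\<^bsub>Xg\<^esub> x) \<otimes>\<^bsub>Xg\<^esub> x" using xc by (simp add: Xg.m_assoc)
      hence "q2 x' = frac (q2 (x' \<otimes>\<^bsub>Xg\<^esub> inv\<^bsub>Xg\<^esub> x) + q2 x)" using q2mul[OF d x] by simp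
      also have "\<dots> = q2 x" using z q2car[OF x] by (simp add: prufer_carrier)
      finally show ?thesis by simp
    qed
    define qY where "qY = (\<lambda>y. q2 (SOME x. x \<in> H \<and> h x = y))"
    have qYeq: "qY (h x) = q2 x" if "x \<in> H" for x
    proof -
      have "\<exists>x'. x' \<in> H \<and> h x' = h x" using that by blast
      hence "(SOME x'. x' \<in> H \<and> h x' = h x) \<in> H \<and> h (SOME x'. x' \<in> H \<and> h x' = h x) = h x"
        by (rule someI_ex)
      thus ?thesis unfolding qY_def using wd that by metis
    qed
    have HXS: "subgroup H XS" unfolding XS_def using Xg.subgroup_incl[OF H S HS] .
    have subY: "subgroup (h ` H) Y" using hS.subgroup_img_is_subgroup[OF HXS] .
    have "qY \<in> hom (Y\<lparr>carrier := h ` H\<rparr>) (prufer p)"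
    proof (rule homI)
      fix y assume "y \<in> carrier (Y\<lparr>carrier := h ` H\<rparr>)"
      then obtain x where "x \<in> H" "y = h x" by auto
      thus "qY y \<in> carrier (prufer p)" using qYeq q2car by simp
    next
      fix y1 y2 assume "y1 \<in> carrier (Y\<lparr>carrier := h ` H\<rparr>)" "y2 \<in> carrier (Y\<lparr>carrier := h ` H\<rparr>)"
      then obtain x1 x2 where x: "x1 \<in> H" "x2 \<in> H" and y: "y1 = h x1" "y2 = h x2" by auto
      have xS: "x1 \<in> carrier XS" "x2 \<in> carrier XS" using x HS by (auto simp: XS_def)
      have "y1 \<otimes>\<^bsub>Y\<^esub> y2 = h (x1 \<otimes>\<^bsub>Xg\<^esub> x2)"
        using hS.hom_mult[OF xS] y by (simp add: XS_def)
      moreover have "x1 \<otimes>\<^bsub>Xg\<^esub> x2 \<in> H" using subgroup.m_closed[OF H x] .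
      ultimately have "qY (y1 \<otimes>\<^bsub>Y\<^esub> y2) = q2 (x1 \<otimes>\<^bsub>Xg\<^esub> x2)" using qYeq by simp
      thus "qY (y1 \<otimes>\<^bsub>Y\<lparr>carrier := h ` H\<rparr>\<^esub> y2) = qY y1 \<otimes>\<^bsub>prufer p\<^esub> qY y2"
        using q2mul[OF x] qYeq x y by simp
    qed
    moreover have "qY ` (h ` H) = carrier (prufer p)"
    proof -
      have "qY ` (h ` H) = q2 ` H" using qYeq by (force simp: image_image)
      thus ?thesis using q2s by simp
    qed
    moreover have "h ` H \<subseteq> carrier Y" using subgroup.subset[OF subY] .
    ultimately have "psec Y (carrier Y) p" unfolding psec_def using subY by blast
    thus ?thesis by blast
  qed
qed


context comm_group
begin

lemma fp_pow:
  assumes "f \<in> I \<rightarrow> carrier G"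
  shows "(finprod G f I) [^] (k::int) = finprod G (\<lambda>i. f i [^] k) I"
  using assms
proof (induction I rule: infinite_finite_induct)
  case (infinite A) then show ?case by simp
next
  case empty then show ?case by simp
next
  case (insert a A)
  have fa: "f a \<in> carrier G" and fA: "f \<in> A \<rightarrow> carrier G" using insert.prems by auto
  have "finprod G f (insert a A) [^] k = (f a \<otimes> finprod G f A) [^] k"
    using insert fa fA by simp
  also have "\<dots> = f a [^] k \<otimes> finprod G f A [^] k"
    using fa fA by (simp add: int_pow_mult_distrib m_comm)
  also have "\<dots> = f a [^] k \<otimes> finprod G (\<lambda>i. f i [^] k) A" using insert.IH fA by simp
  also have "\<dots> = finprod G (\<lambda>i. f i [^] k) (insert a A)"
    using insert fa fA by (simp add: Pi_def)
  finally show ?case .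
qed

lemma fp_expsum:
  assumes "x \<in> carrier G"
  shows "finprod G (\<lambda>s. x [^] (e s :: int)) I = x [^] (\<Sum>s\<in>I. e s)"
proof (induction I rule: infinite_finite_induct)
  case (infinite A) then show ?case by simp
next
  case empty then show ?case by simp
next
  case (insert a A)
  then show ?case using assms by (simp add: int_pow_mult Pi_def)
qed

lemma fp_swap:
  assumes "finite A" "finite B" "\<And>a b. a \<in> A \<Longrightarrow> b \<in> B \<Longrightarrow> f a b \<in> carrier G"
  shows "finprod G (\<lambda>a. finprod G (\<lambda>b. f a b) B) A = finprod G (\<lambda>b. finprod G (\<lambda>a. f a b) A) B"
  using assms
proof (induction A rule: finite_induct)
  case empty then show ?case by simp
next
  case (insert a A)
  have c1: "(\<lambda>b. f a b) \<in> B \<rightarrow> carrier G" using insert.prems by auto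
  have c2: "(\<lambda>b. finprod G (\<lambda>a. f a b) A) \<in> B \<rightarrow> carrier G" using insert.prems by (auto intro: finprod_closed)
  have "finprod G (\<lambda>a. finprod G (\<lambda>b. f a b) B) (insert a A)
      = finprod G (\<lambda>b. f a b) B \<otimes> finprod G (\<lambda>a. finprod G (\<lambda>b. f a b) B) A"
    using insert by (simp add: Pi_def)
  also have "\<dots> = finprod G (\<lambda>b. f a b) B \<otimes> finprod G (\<lambda>b. finprod G (\<lambda>a. f a b) A) B"
    using insert by simp
  also have "\<dots> = finprod G (\<lambda>b. f a b \<otimes> finprod G (\<lambda>a. f a b) A) B"
    using finprod_multf[OF c1 c2] by simp
  also have "\<dots> = finprod G (\<lambda>b. finprod G (\<lambda>a. f a b) (insert a A)) B"
    using insert by (intro finprod_cong) (auto simp: Pi_def)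
  finally show ?case .
qed

lemma fp_sub:
  assumes "subgroup H G" "f \<in> I \<rightarrow> H"
  shows "finprod G f I \<in> H"
  using assms(2)
proof (induction I rule: infinite_finite_induct)
  case (infinite A) then show ?case using subgroup.one_closed[OF assms(1)] by simp
next
  case empty then show ?case using subgroup.one_closed[OF assms(1)] by simp
next
  case (insert a A)
  have fA: "f \<in> A \<rightarrow> H" "f a \<in> H" using insert.prems by auto
  have "f \<in> A \<rightarrow> carrier G" "f a \<in> carrier G" using fA subgroup.subset[OF assms(1)] by auto
  then have "finprod G f (insert a A) = f a \<otimes> finprod G f A" using insert by simp
  thus ?case using subgroup.m_closed[OF assms(1) fA(2) insert.IH[OF fA(1)]] by simp
qed

end

lemma hom_finprod_sub:
  assumes G: "comm_group G" and Y: "comm_group Y" and S: "subgroup S G"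
    and h: "h \<in> hom (G\<lparr>carrier := S\<rparr>) Y" and f: "f \<in> I \<rightarrow> S"
  shows "h (finprod G f I) = finprod Y (\<lambda>i. h (f i)) I"
proof -
  interpret G: comm_group G by fact
  interpret Y: comm_group Y by fact
  interpret hS: group_hom "G\<lparr>carrier := S\<rparr>" Y h
    using subgroup.subgroup_is_group[OF S G.is_group] Y.is_group h
    unfolding group_hom_def group_hom_axioms_def by blast
  have h1: "h \<one>\<^bsub>G\<^esub> = \<one>\<^bsub>Y\<^esub>" using hS.hom_one by simp
  have hc: "\<And>x. x \<in> S \<Longrightarrow> h x \<in> carrier Y" using hS.hom_closed by simp
  show ?thesis using f
  proof (induction I rule: infinite_finite_induct)
    case (infinite A)
    with h1 show ?case by simp
  next
    case empty then show ?case using h1 by simp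
  next
    case (insert a A)
    have fA: "f \<in> A \<rightarrow> S" "f a \<in> S" using insert.prems by auto
    have fAc: "f \<in> A \<rightarrow> carrier G" "f a \<in> carrier G" using fA subgroup.subset[OF S] by auto
    have pS: "finprod G f A \<in> S" using G.fp_sub[OF S fA(1)] .
    have "h (finprod G f (insert a A)) = h (f a \<otimes>\<^bsub>G\<^esub> finprod G f A)" using insert fAc by simp
    also have "\<dots> = h (f a) \<otimes>\<^bsub>Y\<^esub> h (finprod G f A)"
      using hS.hom_mult[of "f a" "finprod G f A"] fA pS by simp
    also have "\<dots> = h (f a) \<otimes>\<^bsub>Y\<^esub> finprod Y (\<lambda>i. h (f i)) A" using insert.IH[OF fA(1)] by simp
    also have "\<dots> = finprod Y (\<lambda>i. h (f i)) (insert a A)"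
    proof -
      have "(\<lambda>i. h (f i)) \<in> insert a A \<rightarrow> carrier Y" using insert.prems by (auto simp: Pi_def intro!: hc)
      thus ?thesis using insert by simp
    qed
    finally show ?case .
  qed
qed


definition rkS :: "('m, 'd) monoid_scheme \<Rightarrow> 'm set \<Rightarrow> nat \<Rightarrow> bool" where
  "rkS G S r \<longleftrightarrow> (\<forall>T. T \<subseteq> S \<and> Z_independent G T \<longrightarrow> finite T \<and> card T \<le> r)"

definition findep :: "('m, 'd) monoid_scheme \<Rightarrow> 'i set \<Rightarrow> ('i \<Rightarrow> 'm) \<Rightarrow> bool" where
  "findep G I v \<longleftrightarrow> (\<forall>c::'i \<Rightarrow> int. finprod G (\<lambda>i. v i [^]\<^bsub>G\<^esub> c i) I = \<one>\<^bsub>G\<^esub> \<longrightarrow> (\<forall>i\<in>I. c i = 0))"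

lemma Z_independent_subset:
  assumes "Z_independent G T" "T' \<subseteq> T"
  shows "Z_independent G T'"
  unfolding Z_independent_def
proof (intro conjI allI impI)
  show "T' \<subseteq> carrier G" using assms unfolding Z_independent_def by auto
next
  fix U and c :: "_ \<Rightarrow> int"
  assume u: "finite U \<and> U \<subseteq> T' \<and> finprod G (\<lambda>x. x [^]\<^bsub>G\<^esub> c x) U = \<one>\<^bsub>G\<^esub>"
  have "U \<subseteq> T" using u assms(2) by auto
  thus "\<forall>x\<in>U. c x = 0" using assms(1)[unfolded Z_independent_def, THEN conjunct2, rule_format, of U c] u by auto
qed

context comm_group
begin

lemma fam_inj:
  assumes I: "finite I" and v: "v \<in> I \<rightarrow> carrier G" and ind: "findep G I v"
  shows "inj_on v I"
proof (rule inj_onI, rule ccontr)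
  fix i j assume ij: "i \<in> I" "j \<in> I" "v i = v j" "i \<noteq> j"
  define c :: "_ \<Rightarrow> int" where "c = (\<lambda>k. if k = i then 1 else if k = j then -1 else 0)"
  have vi: "v i \<in> carrier G" using v ij by auto
  have "finprod G (\<lambda>k. v k [^] c k) I = finprod G (\<lambda>k. v k [^] c k) {i, j}"
    by (rule finprod_mono_neutral_cong_right) (use I ij v in \<open>auto simp: c_def Pi_def\<close>)
  also have "\<dots> = v i [^] c i \<otimes> finprod G (\<lambda>k. v k [^] c k) {j}"
    using ij vi v by (subst finprod_insert) (auto simp: Pi_def)
  also have "\<dots> = v i \<otimes> inv (v i)"
    using ij vi by (simp add: c_def int_pow_neg)
  also have "\<dots> = \<one>" using vi by simp
  finally have "finprod G (\<lambda>k. v k [^] c k) I = \<one>" .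
  hence "c i = 0" using ind[unfolded findep_def, rule_format, of c] ij by blast
  thus False by (simp add: c_def)
qed

lemma fam_to_set:
  assumes I: "finite I" and v: "v \<in> I \<rightarrow> carrier G" and ind: "findep G I v"
  shows "Z_independent G (v ` I)"
  unfolding Z_independent_def
proof (intro conjI allI impI)
  show "v ` I \<subseteq> carrier G" using v by auto
next
  fix T and c :: "_ \<Rightarrow> int"
  assume a: "finite T \<and> T \<subseteq> v ` I \<and> finprod G (\<lambda>x. x [^] c x) T = \<one>"
  have inj: "inj_on v I" using fam_inj[OF I v ind] .
  define I' where "I' = {k\<in>I. v k \<in> T}"
  have TI': "T = v ` I'" using a by (auto simp: I'_def)
  have injI': "inj_on v I'" using inj by (rule inj_on_subset) (auto simp: I'_def)
  define c' where "c' = (\<lambda>k. if k \<in> I' then c (v k) else 0)"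
  have "finprod G (\<lambda>k. v k [^] c' k) I = finprod G (\<lambda>k. v k [^] c (v k)) I'"
    by (rule finprod_mono_neutral_cong_right) (use I v in \<open>auto simp: c'_def I'_def Pi_def\<close>)
  also have "\<dots> = finprod G (\<lambda>x. x [^] c x) (v ` I')"
    by (rule finprod_reindex[symmetric]) (use v injI' in \<open>auto simp: I'_def Pi_def\<close>)
  also have "\<dots> = \<one>" using a TI' by simp
  finally have "finprod G (\<lambda>k. v k [^] c' k) I = \<one>" .
  hence z: "\<forall>k\<in>I. c' k = 0" using ind[unfolded findep_def, rule_format, of c'] by blast
  show "\<forall>x\<in>T. c x = 0"
  proof
    fix x assume "x \<in> T"
    then obtain k where "k \<in> I'" "x = v k" using TI' by blast
    thus "c x = 0" using z by (auto simp: c'_def I'_def)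
  qed
qed

lemma fam_card:
  assumes I: "finite I" and v: "v \<in> I \<rightarrow> S" and S: "S \<subseteq> carrier G"
    and ind: "findep G I v" and r: "rkS G S r"
  shows "card I \<le> r"
proof -
  have vc: "v \<in> I \<rightarrow> carrier G" using v S by auto
  have "card (v ` I) \<le> r" using r fam_to_set[OF I vc ind] v unfolding rkS_def by blast
  thus ?thesis using card_image[OF fam_inj[OF I vc ind]] by simp
qed

end


lemma rank_hom_transfer:
  assumes G: "comm_group G" and Y: "comm_group Y" and S: "subgroup S G"
    and h: "h \<in> hom (G\<lparr>carrier := S\<rparr>) Y"
    and rY: "rkS Y (carrier Y) a" and rK: "rkS G {x\<in>S. h x = \<one>\<^bsub>Y\<^esub>} b"
  shows "rkS G S (a + b)"
  unfolding rkS_def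
proof (intro allI impI)
  interpret G: comm_group G by fact
  interpret Y: comm_group Y by fact
  interpret hS: group_hom "G\<lparr>carrier := S\<rparr>" Y h
    using subgroup.subgroup_is_group[OF S G.is_group] Y.is_group h
    unfolding group_hom_def group_hom_axioms_def by blast
  have hc: "\<And>x. x \<in> S \<Longrightarrow> h x \<in> carrier Y" using hS.hom_closed by simp
  have hpow: "\<And>x k. x \<in> S \<Longrightarrow> h (x [^]\<^bsub>G\<^esub> (k::int)) = h x [^]\<^bsub>Y\<^esub> k"
  proof -
    fix x and k :: int assume x: "x \<in> S"
    have "x [^]\<^bsub>G\<^esub> k = x [^]\<^bsub>G\<lparr>carrier := S\<rparr>\<^esub> k" using G.int_pow_consistent[OF S x] .
    thus "h (x [^]\<^bsub>G\<^esub> k) = h x [^]\<^bsub>Y\<^esub> k" using hS.hom_int_pow[of x k] x by simp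
  qed
  have SG: "S \<subseteq> carrier G" using subgroup.subset[OF S] .
  fix T assume T: "T \<subseteq> S \<and> Z_independent G T"
  show "finite T \<and> card T \<le> a + b"
  proof (rule ccontr)
    assume neg: "\<not> (finite T \<and> card T \<le> a + b)"
    obtain S0 where S0T: "S0 \<subseteq> T" and S0f: "finite S0" and S0c: "card S0 = a + b + 1"
    proof (cases "finite T")
      case True
      with neg have "a + b + 1 \<le> card T" by simp
      then obtain S0 where "S0 \<subseteq> T" "card S0 = a + b + 1" "finite S0"
        by (rule obtain_subset_with_card_n)
      thus ?thesis using that by blast
    next
      case False
      then obtain S0 where "finite S0" "card S0 = a + b + 1" "S0 \<subseteq> T"
        using infinite_arbitrarily_large by blast
      thus ?thesis using that by blast
    qed
    have S0S: "S0 \<subseteq> S" using S0T T by auto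
    have ind0: "Z_independent G S0" using Z_independent_subset T S0T by blast
    have key0: "\<And>c :: _ \<Rightarrow> int. finprod G (\<lambda>x. x [^]\<^bsub>G\<^esub> c x) S0 = \<one>\<^bsub>G\<^esub> \<Longrightarrow> \<forall>x\<in>S0. c x = 0"
    proof -
      fix c :: "_ \<Rightarrow> int" assume e: "finprod G (\<lambda>x. x [^]\<^bsub>G\<^esub> c x) S0 = \<one>\<^bsub>G\<^esub>"
      show "\<forall>x\<in>S0. c x = 0"
        using ind0[unfolded Z_independent_def, THEN conjunct2, rule_format, of S0 c] S0f e by blast
    qed
    define F where "F = {J. J \<subseteq> S0 \<and> findep Y J h}"
    have Ff: "finite F"
    proof (rule finite_subset)
      show "F \<subseteq> Pow S0" by (auto simp: F_def)
      show "finite (Pow S0)" using S0f by simp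
    qed
    have F0: "{} \<in> F" unfolding F_def findep_def by simp
    define m where "m = Max (card ` F)"
    have "m \<in> card ` F" unfolding m_def using Ff F0 by (intro Max_in) auto
    then obtain J where JF: "J \<in> F" and Jm: "card J = m" by blast
    have Jmax: "\<And>J'. J' \<in> F \<Longrightarrow> card J' \<le> card J"
      unfolding Jm m_def using Ff by (intro Max_ge) auto
    have JS0: "J \<subseteq> S0" and Jind: "findep Y J h" using JF by (auto simp: F_def)
    have Jf: "finite J" using JS0 S0f by (rule finite_subset)
    have cardJ: "card J \<le> a"
      by (rule Y.fam_card[OF Jf _ _ Jind rY]) (use JS0 S0S hc in auto)
    have dep: "\<exists>C :: _ \<Rightarrow> int. finprod Y (\<lambda>i. h i [^]\<^bsub>Y\<^esub> C i) (insert s J) = \<one>\<^bsub>Y\<^esub> \<and> C s \<noteq> 0"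
      if s: "s \<in> S0 - J" for s
    proof -
      have "insert s J \<notin> F"
      proof
        assume "insert s J \<in> F"
        hence "card (insert s J) \<le> card J" by (rule Jmax)
        thus False using s Jf by simp
      qed
      hence "\<not> findep Y (insert s J) h" using s JS0 by (auto simp: F_def)
      then obtain C :: "_ \<Rightarrow> int" where C1: "finprod Y (\<lambda>i. h i [^]\<^bsub>Y\<^esub> C i) (insert s J) = \<one>\<^bsub>Y\<^esub>"
        and C2: "\<exists>i\<in>insert s J. C i \<noteq> 0" unfolding findep_def by blast
      have hJ: "(\<lambda>i. h i [^]\<^bsub>Y\<^esub> C i) \<in> J \<rightarrow> carrier Y" using JS0 S0S hc by auto
      have "C s \<noteq> 0"
      proof
        assume Cs: "C s = 0"
        have "finprod Y (\<lambda>i. h i [^]\<^bsub>Y\<^esub> C i) (insert s J)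
              = h s [^]\<^bsub>Y\<^esub> C s \<otimes>\<^bsub>Y\<^esub> finprod Y (\<lambda>i. h i [^]\<^bsub>Y\<^esub> C i) J"
          using s Jf hJ hc S0S by (subst Y.finprod_insert) auto
        also have "\<dots> = finprod Y (\<lambda>i. h i [^]\<^bsub>Y\<^esub> C i) J" using Cs hJ by simp
        finally have "finprod Y (\<lambda>i. h i [^]\<^bsub>Y\<^esub> C i) J = \<one>\<^bsub>Y\<^esub>" using C1 by simp
        hence "\<forall>i\<in>J. C i = 0" using Jind[unfolded findep_def, rule_format, of C] by blast
        thus False using C2 Cs by auto
      qed
      thus ?thesis using C1 by blast
    qed
    hence "\<forall>s\<in>S0 - J. \<exists>C :: _ \<Rightarrow> int. finprod Y (\<lambda>i. h i [^]\<^bsub>Y\<^esub> C i) (insert s J) = \<one>\<^bsub>Y\<^esub> \<and> C s \<noteq> 0"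
      by blast
    from bchoice[OF this] obtain C :: "_ \<Rightarrow> _ \<Rightarrow> int" where C0: "\<forall>s\<in>S0 - J.
        finprod Y (\<lambda>i. h i [^]\<^bsub>Y\<^esub> C s i) (insert s J) = \<one>\<^bsub>Y\<^esub> \<and> C s s \<noteq> 0"
      by blast
    have C: "\<And>s. s \<in> S0 - J \<Longrightarrow>
        finprod Y (\<lambda>i. h i [^]\<^bsub>Y\<^esub> C s i) (insert s J) = \<one>\<^bsub>Y\<^esub> \<and> C s s \<noteq> 0"
      using C0 by blast
    define c' where "c' = (\<lambda>s i. if i \<in> insert s J then C s i else 0)"
    define u where "u = (\<lambda>s. finprod G (\<lambda>i. i [^]\<^bsub>G\<^esub> c' s i) S0)"
    define I2 where "I2 = S0 - J"
    have uS: "u s \<in> S" for s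
      unfolding u_def
      by (rule G.fp_sub[OF S]) (use S0S G.subgroup_int_pow_closed[OF S] in auto)
    have uK: "h (u s) = \<one>\<^bsub>Y\<^esub>" if s: "s \<in> I2" for s
    proof -
      have "h (u s) = finprod Y (\<lambda>i. h (i [^]\<^bsub>G\<^esub> c' s i)) S0"
        unfolding u_def
        by (rule hom_finprod_sub[OF G Y S h]) (use S0S G.subgroup_int_pow_closed[OF S] in auto)
      also have "\<dots> = finprod Y (\<lambda>i. h i [^]\<^bsub>Y\<^esub> c' s i) S0"
        by (rule Y.finprod_cong') (use S0S hpow hc in auto)
      also have "\<dots> = finprod Y (\<lambda>i. h i [^]\<^bsub>Y\<^esub> C s i) (insert s J)"
        by (rule Y.finprod_mono_neutral_cong_right) (use S0f s JS0 S0S hc in \<open>auto simp: I2_def c'_def\<close>)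
      also have "\<dots> = \<one>\<^bsub>Y\<^esub>" using C s by (simp add: I2_def)
      finally show ?thesis .
    qed
    have I2f: "finite I2" using S0f by (simp add: I2_def)
    have cI2: "card I2 = card S0 - card J" unfolding I2_def using card_Diff_subset[OF Jf JS0] .
    have "\<not> findep G I2 u"
    proof
      assume fi: "findep G I2 u"
      have u1: "u \<in> I2 \<rightarrow> {x\<in>S. h x = \<one>\<^bsub>Y\<^esub>}" using uS uK by auto
      have u2: "{x\<in>S. h x = \<one>\<^bsub>Y\<^esub>} \<subseteq> carrier G" using SG by auto
      have "card I2 \<le> b" by (rule G.fam_card[OF I2f u1 u2 fi rK])
      thus False using cI2 cardJ S0c by arith
    qed
    hence "\<exists>d :: _ \<Rightarrow> int. finprod G (\<lambda>s. u s [^]\<^bsub>G\<^esub> d s) I2 = \<one>\<^bsub>G\<^esub> \<and> (\<exists>t\<in>I2. d t \<noteq> 0)"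
      unfolding findep_def by simp
    then obtain d :: "_ \<Rightarrow> int" where d1: "finprod G (\<lambda>s. u s [^]\<^bsub>G\<^esub> d s) I2 = \<one>\<^bsub>G\<^esub>"
      and d2: "\<exists>t\<in>I2. d t \<noteq> 0" by blast
    from d2 obtain t where t: "t \<in> I2" "d t \<noteq> 0" by blast
    have S0c': "\<And>i. i \<in> S0 \<Longrightarrow> i \<in> carrier G" using S0S SG by auto
    have "finprod G (\<lambda>s. u s [^]\<^bsub>G\<^esub> d s) I2
        = finprod G (\<lambda>s. finprod G (\<lambda>i. i [^]\<^bsub>G\<^esub> (c' s i * d s)) S0) I2"
    proof (rule G.finprod_cong')
      fix s assume "s \<in> I2"
      have "u s [^]\<^bsub>G\<^esub> d s = finprod G (\<lambda>i. (i [^]\<^bsub>G\<^esub> c' s i) [^]\<^bsub>G\<^esub> d s) S0"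
        unfolding u_def by (rule G.fp_pow) (use S0c' in auto)
      also have "\<dots> = finprod G (\<lambda>i. i [^]\<^bsub>G\<^esub> (c' s i * d s)) S0"
        by (rule G.finprod_cong') (use S0c' G.int_pow_pow in auto)
      finally show "u s [^]\<^bsub>G\<^esub> d s = finprod G (\<lambda>i. i [^]\<^bsub>G\<^esub> (c' s i * d s)) S0" .
    qed (use S0c' in auto)
    also have "\<dots> = finprod G (\<lambda>i. finprod G (\<lambda>s. i [^]\<^bsub>G\<^esub> (c' s i * d s)) I2) S0"
      by (rule G.fp_swap) (use I2f S0f S0c' in auto)
    also have "\<dots> = finprod G (\<lambda>i. i [^]\<^bsub>G\<^esub> (\<Sum>s\<in>I2. c' s i * d s)) S0"
    proof (rule G.finprod_cong')
      fix i assume "i \<in> S0"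
      thus "finprod G (\<lambda>s. i [^]\<^bsub>G\<^esub> (c' s i * d s)) I2 = i [^]\<^bsub>G\<^esub> (\<Sum>s\<in>I2. c' s i * d s)"
        using G.fp_expsum[OF S0c'[OF \<open>i \<in> S0\<close>], of "\<lambda>s. c' s i * d s" I2] by simp
    qed (use S0c' in auto)
    finally have "finprod G (\<lambda>i. i [^]\<^bsub>G\<^esub> (\<Sum>s\<in>I2. c' s i * d s)) S0 = \<one>\<^bsub>G\<^esub>" using d1 by simp
    hence z: "\<forall>i\<in>S0. (\<Sum>s\<in>I2. c' s i * d s) = 0" by (rule key0)
    have tS0: "t \<in> S0" "t \<notin> J" using t by (auto simp: I2_def)
    have "(\<Sum>s\<in>I2. c' s t * d s) = (\<Sum>s\<in>I2. if s = t then C t t * d t else 0)"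
      by (rule sum.cong) (use tS0 in \<open>auto simp: c'_def\<close>)
    also have "\<dots> = C t t * d t" using I2f t by simp
    finally have "C t t * d t = 0" using z tS0 by simp
    moreover have "C t t \<noteq> 0" using C t by (simp add: I2_def)
    ultimately show False using t by simp
  qed
qed


definition indN :: "('g, 'c) monoid_scheme \<Rightarrow> 'g set \<Rightarrow> ('m, 'd) monoid_scheme \<Rightarrow> ('g \<Rightarrow> 'm \<Rightarrow> 'm)
    \<Rightarrow> ('g \<Rightarrow> 'm) monoid" where
  "indN G G0 M actM = \<lparr> carrier = {\<phi>. (\<forall>x. \<phi> x \<in> carrier M) \<and> (\<forall>x. x \<notin> carrier G \<longrightarrow> \<phi> x = \<one>\<^bsub>M\<^esub>)
        \<and> (\<forall>h\<in>G0. \<forall>x\<in>carrier G. \<phi> (h \<otimes>\<^bsub>G\<^esub> x) = actM h (\<phi> x))},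
     monoid.mult = (\<lambda>\<phi> \<psi> x. \<phi> x \<otimes>\<^bsub>M\<^esub> \<psi> x), one = (\<lambda>x. \<one>\<^bsub>M\<^esub>) \<rparr>"

locale ind_ctx =
  fixes G :: "'g monoid" and G0 :: "'g set" and M :: "'m monoid" and actM :: "'g \<Rightarrow> 'm \<Rightarrow> 'm"
  assumes grpG: "group G" and sub0: "subgroup G0 G"
    and modM: "G_module (G\<lparr>carrier := G0\<rparr>) M actM"
begin

abbreviation "N \<equiv> indN G G0 M actM"

lemma cgM: "comm_group M" using modM unfolding G_module_def by blast

lemma actM_closed: "g \<in> G0 \<Longrightarrow> x \<in> carrier M \<Longrightarrow> actM g x \<in> carrier M"
  using modM unfolding G_module_def by simp

lemma actM_mult: "g \<in> G0 \<Longrightarrow> x \<in> carrier M \<Longrightarrow> y \<in> carrier M \<Longrightarrow>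
    actM g (x \<otimes>\<^bsub>M\<^esub> y) = actM g x \<otimes>\<^bsub>M\<^esub> actM g y"
  using modM unfolding G_module_def by simp

lemma actM_one: "g \<in> G0 \<Longrightarrow> actM g \<one>\<^bsub>M\<^esub> = \<one>\<^bsub>M\<^esub>"
proof -
  interpret M: comm_group M by (rule cgM)
  assume g: "g \<in> G0"
  have "actM g \<one>\<^bsub>M\<^esub> = actM g \<one>\<^bsub>M\<^esub> \<otimes>\<^bsub>M\<^esub> actM g \<one>\<^bsub>M\<^esub>"
    using actM_mult[OF g, of "\<one>\<^bsub>M\<^esub>" "\<one>\<^bsub>M\<^esub>"] by simp
  thus ?thesis using actM_closed[OF g M.one_closed]
    by (metis M.l_one M.one_closed M.r_cancel)
qed

lemma actM_inv: "g \<in> G0 \<Longrightarrow> x \<in> carrier M \<Longrightarrow> actM g (inv\<^bsub>M\<^esub> x) = inv\<^bsub>M\<^esub> (actM g x)"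
proof -
  interpret M: comm_group M by (rule cgM)
  assume g: "g \<in> G0" and x: "x \<in> carrier M"
  have "actM g (inv\<^bsub>M\<^esub> x) \<otimes>\<^bsub>M\<^esub> actM g x = \<one>\<^bsub>M\<^esub>"
    using actM_mult[OF g M.inv_closed[OF x] x] actM_one[OF g] x by simp
  thus ?thesis using actM_closed[OF g] x M.inv_closed[OF x]
    by (metis M.inv_equality)
qed

lemma N_carrier: "\<phi> \<in> carrier N \<longleftrightarrow> (\<forall>x. \<phi> x \<in> carrier M) \<and> (\<forall>x. x \<notin> carrier G \<longrightarrow> \<phi> x = \<one>\<^bsub>M\<^esub>)
        \<and> (\<forall>h\<in>G0. \<forall>x\<in>carrier G. \<phi> (h \<otimes>\<^bsub>G\<^esub> x) = actM h (\<phi> x))"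
  by (simp add: indN_def)

lemma N_mult [simp]: "\<phi> \<otimes>\<^bsub>N\<^esub> \<psi> = (\<lambda>x. \<phi> x \<otimes>\<^bsub>M\<^esub> \<psi> x)"
  by (simp add: indN_def)

lemma N_one [simp]: "\<one>\<^bsub>N\<^esub> = (\<lambda>x. \<one>\<^bsub>M\<^esub>)"
  by (simp add: indN_def)

lemma N_comm_group: "comm_group N"
proof -
  interpret M: comm_group M by (rule cgM)
  show ?thesis
  proof (rule comm_groupI)
    fix \<phi> \<psi> assume a: "\<phi> \<in> carrier N" "\<psi> \<in> carrier N"
    show "\<phi> \<otimes>\<^bsub>N\<^esub> \<psi> \<in> carrier N"
      unfolding N_carrier N_mult using a unfolding N_carrier by (auto simp: actM_mult)
  next
    show "\<one>\<^bsub>N\<^esub> \<in> carrier N" unfolding N_carrier N_one by (auto simp: actM_one)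
  next
    fix \<phi> \<psi> \<chi> assume a: "\<phi> \<in> carrier N" "\<psi> \<in> carrier N" "\<chi> \<in> carrier N"
    show "\<phi> \<otimes>\<^bsub>N\<^esub> \<psi> \<otimes>\<^bsub>N\<^esub> \<chi> = \<phi> \<otimes>\<^bsub>N\<^esub> (\<psi> \<otimes>\<^bsub>N\<^esub> \<chi>)"
      using a unfolding N_carrier N_mult by (auto simp: M.m_assoc)
  next
    fix \<phi> \<psi> assume a: "\<phi> \<in> carrier N" "\<psi> \<in> carrier N"
    show "\<phi> \<otimes>\<^bsub>N\<^esub> \<psi> = \<psi> \<otimes>\<^bsub>N\<^esub> \<phi>"
      using a unfolding N_carrier N_mult by (auto simp: M.m_comm)
  next
    fix \<phi> assume a: "\<phi> \<in> carrier N"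
    show "\<one>\<^bsub>N\<^esub> \<otimes>\<^bsub>N\<^esub> \<phi> = \<phi>"
      using a unfolding N_carrier N_mult N_one by auto
  next
    fix \<phi> assume a: "\<phi> \<in> carrier N"
    define \<psi> where "\<psi> = (\<lambda>x. inv\<^bsub>M\<^esub> (\<phi> x))"
    have "\<psi> \<in> carrier N"
      using a unfolding N_carrier \<psi>_def by (auto simp: actM_inv)
    moreover have "\<psi> \<otimes>\<^bsub>N\<^esub> \<phi> = \<one>\<^bsub>N\<^esub>"
      using a unfolding N_carrier N_mult N_one \<psi>_def by auto
    ultimately show "\<exists>\<psi>\<in>carrier N. \<psi> \<otimes>\<^bsub>N\<^esub> \<phi> = \<one>\<^bsub>N\<^esub>" by blast
  qed
qed

lemma N_inv: "\<phi> \<in> carrier N \<Longrightarrow> inv\<^bsub>N\<^esub> \<phi> = (\<lambda>x. inv\<^bsub>M\<^esub> (\<phi> x))"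
proof -
  interpret M: comm_group M by (rule cgM)
  interpret NN: comm_group N by (rule N_comm_group)
  assume a: "\<phi> \<in> carrier N"
  have c: "(\<lambda>x. inv\<^bsub>M\<^esub> (\<phi> x)) \<in> carrier N"
    using a unfolding N_carrier by (auto simp: actM_inv)
  have "(\<lambda>x. inv\<^bsub>M\<^esub> (\<phi> x)) \<otimes>\<^bsub>N\<^esub> \<phi> = \<one>\<^bsub>N\<^esub>"
    using a unfolding N_carrier N_mult N_one by auto
  thus ?thesis using NN.inv_equality[OF _ a c] by simp
qed

definition NC :: "'g set set \<Rightarrow> ('g \<Rightarrow> 'm) set" where
  "NC C = {\<phi> \<in> carrier N. \<forall>x\<in>carrier G - \<Union>C. \<phi> x = \<one>\<^bsub>M\<^esub>}"

lemma NC_subgroup: "subgroup (NC C) N"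
proof -
  interpret M: comm_group M by (rule cgM)
  interpret NN: comm_group N by (rule N_comm_group)
  show ?thesis
  proof (rule NN.subgroupI)
    show "NC C \<subseteq> carrier N" by (auto simp: NC_def)
    show "NC C \<noteq> {}" using NN.one_closed by (auto simp: NC_def intro!: exI[of _ "\<one>\<^bsub>N\<^esub>"])
  next
    fix \<phi> assume a: "\<phi> \<in> NC C"
    hence c: "\<phi> \<in> carrier N" by (simp add: NC_def)
    show "inv\<^bsub>N\<^esub> \<phi> \<in> NC C" using a NN.inv_closed[OF c] unfolding NC_def N_inv[OF c] by auto
  next
    fix \<phi> \<psi> assume a: "\<phi> \<in> NC C" "\<psi> \<in> NC C"
    hence c: "\<phi> \<in> carrier N" "\<psi> \<in> carrier N" by (auto simp: NC_def)
    show "\<phi> \<otimes>\<^bsub>N\<^esub> \<psi> \<in> NC C" using a NN.m_closed[OF c] unfolding NC_def by auto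
  qed
qed

end


context ind_ctx
begin

lemma NC_empty: "NC {} = {\<one>\<^bsub>N\<^esub>}"
proof -
  interpret NN: comm_group N by (rule N_comm_group)
  show ?thesis
  proof
    show "NC {} \<subseteq> {\<one>\<^bsub>N\<^esub>}"
    proof
      fix \<phi> assume a: "\<phi> \<in> NC {}"
      hence "\<forall>x. \<phi> x = \<one>\<^bsub>M\<^esub>" unfolding NC_def N_carrier by auto
      thus "\<phi> \<in> {\<one>\<^bsub>N\<^esub>}" by auto
    qed
    show "{\<one>\<^bsub>N\<^esub>} \<subseteq> NC {}" using NN.one_closed by (auto simp: NC_def)
  qed
qed

lemma NC_all: "NC (rcosets\<^bsub>G\<^esub> G0) = carrier N"
  using group.rcosets_part_G[OF grpG sub0] unfolding NC_def by auto

lemma ev_hom: "(\<lambda>\<phi>. \<phi> t) \<in> hom (N\<lparr>carrier := S\<rparr>) M"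
  if "S \<subseteq> carrier N"
  using that unfolding hom_def N_carrier by (auto simp: indN_def)

lemma NC_kernel:
  assumes c: "c = G0 #>\<^bsub>G\<^esub> t" and t: "t \<in> carrier G" and C: "C \<subseteq> rcosets\<^bsub>G\<^esub> G0"
    and cC: "c \<notin> C"
  shows "{\<phi> \<in> NC (insert c C). \<phi> t = \<one>\<^bsub>M\<^esub>} = NC C"
proof -
  interpret G: group G by (rule grpG)
  have tc: "t \<in> c" unfolding c using G.rcos_self[OF t sub0] .
  have tnot: "t \<notin> \<Union>C"
  proof
    assume "t \<in> \<Union>C"
    then obtain c' where c': "c' \<in> C" "t \<in> c'" by blast
    have cr: "c \<in> rcosets\<^bsub>G\<^esub> G0" unfolding c using G.rcosetsI[OF subgroup.subset[OF sub0] t] .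
    have "c' \<noteq> c" using c' cC by blast
    hence "disjnt c' c" using G.rcos_disjoint[OF sub0] c'(1) C cr unfolding pairwise_def by blast
    thus False using c'(2) tc by (auto simp: disjnt_def)
  qed
  show ?thesis
  proof
    show "{\<phi> \<in> NC (insert c C). \<phi> t = \<one>\<^bsub>M\<^esub>} \<subseteq> NC C"
    proof
      fix \<phi> assume a: "\<phi> \<in> {\<phi> \<in> NC (insert c C). \<phi> t = \<one>\<^bsub>M\<^esub>}"
      hence \<phi>N: "\<phi> \<in> carrier N" and \<phi>t: "\<phi> t = \<one>\<^bsub>M\<^esub>"
        and out: "\<And>x. x \<in> carrier G - \<Union>(insert c C) \<Longrightarrow> \<phi> x = \<one>\<^bsub>M\<^esub>" by (auto simp: NC_def)
      have eq: "\<And>h x. h \<in> G0 \<Longrightarrow> x \<in> carrier G \<Longrightarrow> \<phi> (h \<otimes>\<^bsub>G\<^esub> x) = actM h (\<phi> x)"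
        using \<phi>N unfolding N_carrier by blast
      have "\<phi> x = \<one>\<^bsub>M\<^esub>" if x: "x \<in> carrier G - \<Union>C" for x
      proof (cases "x \<in> c")
        case True
        then obtain h where h: "h \<in> G0" "x = h \<otimes>\<^bsub>G\<^esub> t" unfolding c r_coset_def by blast
        thus ?thesis using eq[OF h(1) t] \<phi>t actM_one[OF h(1)] by simp
      next
        case False
        thus ?thesis using out x by auto
      qed
      thus "\<phi> \<in> NC C" using \<phi>N by (auto simp: NC_def)
    qed
  next
    show "NC C \<subseteq> {\<phi> \<in> NC (insert c C). \<phi> t = \<one>\<^bsub>M\<^esub>}"
      using tnot t unfolding NC_def by auto
  qed
qed

end


context ind_ctx
begin

lemma rk_base: "rkS N {\<one>\<^bsub>N\<^esub>} 0"
  unfolding rkS_def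
proof (intro allI impI)
  interpret NN: comm_group N by (rule N_comm_group)
  fix T assume T: "T \<subseteq> {\<one>\<^bsub>N\<^esub>} \<and> Z_independent N T"
  have "T \<noteq> {\<one>\<^bsub>N\<^esub>}"
  proof
    assume T1: "T = {\<one>\<^bsub>N\<^esub>}"
    have o: "\<one>\<^bsub>N\<^esub> \<in> carrier N" by (rule NN.one_closed)
    have "finprod N (\<lambda>x. x [^]\<^bsub>N\<^esub> ((\<lambda>_. 1::int) x)) {\<one>\<^bsub>N\<^esub>} = \<one>\<^bsub>N\<^esub>"
      using o by (simp del: N_one N_mult)
    hence "\<forall>x\<in>{\<one>\<^bsub>N\<^esub>}. (\<lambda>_. 1::int) x = 0"
      using T[unfolded T1 Z_independent_def, THEN conjunct2, THEN conjunct2, rule_format, of "{\<one>\<^bsub>N\<^esub>}" "\<lambda>_. 1::int"]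
      by simp
    thus False by simp
  qed
  hence "T = {}" using T by blast
  thus "finite T \<and> card T \<le> 0" by simp
qed

lemma psec_base: "Factorial_Ring.prime p \<Longrightarrow> \<not> psec N {\<one>\<^bsub>N\<^esub>} p"
proof
  assume p: "Factorial_Ring.prime p" and s: "psec N {\<one>\<^bsub>N\<^esub>} p"
  then obtain H q where H: "H \<subseteq> {\<one>\<^bsub>N\<^esub>}" and qs: "q ` H = carrier (prufer p)"
    unfolding psec_def by blast
  have p1: "p > 1" using p prime_gt_1_nat by blast
  obtain y where y: "y \<in> carrier (prufer p)" "y \<noteq> 0" using prufer_nontrivial[OF p1] by blast
  have z: "(0::rat) \<in> carrier (prufer p)" using comm_group.axioms(2)[OF prufer_comm_group] monoid.one_closed[of "prufer p"]
    by (metis group.is_monoid prufer_one)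
  have "y \<in> q ` H" "0 \<in> q ` H" using y z qs by auto
  then obtain a b where "a \<in> H" "b \<in> H" "y = q a" "0 = q b" by blast
  moreover have "a = b" using calculation H by blast
  ultimately have "y = 0" by simp
  with y show False by simp
qed

lemma NC_props:
  assumes rM: "rkS M (carrier M) r" and fC: "finite C" and C: "C \<subseteq> rcosets\<^bsub>G\<^esub> G0"
  shows "rkS N (NC C) (r * card C) \<and>
    (\<forall>p. Factorial_Ring.prime p \<longrightarrow> psec N (NC C) p \<longrightarrow> psec M (carrier M) p)"
  using fC C
proof (induction C rule: finite_subset_induct')
  case empty
  show ?case using rk_base psec_base unfolding NC_empty by simp
next
  case (insert c C)
  interpret G: group G by (rule grpG)
  obtain t where t: "t \<in> carrier G" and c: "c = G0 #>\<^bsub>G\<^esub> t"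
    using insert.hyps(2) unfolding RCOSETS_def by blast
  have ker: "{\<phi> \<in> NC (insert c C). \<phi> t = \<one>\<^bsub>M\<^esub>} = NC C"
    by (rule NC_kernel[OF c t insert.hyps(3) insert.hyps(4)])
  have sub: "subgroup (NC (insert c C)) N" by (rule NC_subgroup)
  have hom: "(\<lambda>\<phi>. \<phi> t) \<in> hom (N\<lparr>carrier := NC (insert c C)\<rparr>) M"
    by (rule ev_hom) (auto simp: NC_def)
  have rK: "rkS N {\<phi> \<in> NC (insert c C). \<phi> t = \<one>\<^bsub>M\<^esub>} (r * card C)"
    unfolding ker using insert.IH by blast
  have "rkS N (NC (insert c C)) (r + r * card C)"
    by (rule rank_hom_transfer[OF N_comm_group cgM sub hom rM rK])
  moreover have "r * card (insert c C) = r + r * card C" using insert.hyps by simp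
  moreover have "psec M (carrier M) p" if p: "Factorial_Ring.prime p" and s: "psec N (NC (insert c C)) p" for p
  proof -
    have "psec M (carrier M) p \<or> psec N {\<phi> \<in> NC (insert c C). \<phi> t = \<one>\<^bsub>M\<^esub>} p"
      by (rule psec_hom_transfer[OF N_comm_group cgM sub hom p s])
    thus ?thesis unfolding ker using insert.IH p by blast
  qed
  ultimately show ?case by simp
qed

end


context ind_ctx
begin

lemma N_pow: "(\<phi> [^]\<^bsub>N\<^esub> (n::nat)) x = \<phi> x [^]\<^bsub>M\<^esub> n"
  by (induction n) auto

lemma N_torsion_free:
  assumes tf: "torsion_free M"
  shows "torsion_free N"
  unfolding torsion_free_def
proof (intro ballI allI impI)
  fix \<phi> and n :: nat assume \<phi>: "\<phi> \<in> carrier N" and a: "n > 0 \<and> \<phi> [^]\<^bsub>N\<^esub> n = \<one>\<^bsub>N\<^esub>"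
  have "\<phi> x = \<one>\<^bsub>M\<^esub>" for x
  proof -
    have "(\<phi> [^]\<^bsub>N\<^esub> n) x = \<one>\<^bsub>M\<^esub>" using a by simp
    hence "\<phi> x [^]\<^bsub>M\<^esub> n = \<one>\<^bsub>M\<^esub>" by (simp add: N_pow)
    moreover have "\<phi> x \<in> carrier M" using \<phi> unfolding N_carrier by blast
    ultimately show ?thesis using tf a unfolding torsion_free_def by blast
  qed
  thus "\<phi> = \<one>\<^bsub>N\<^esub>" by auto
qed

lemma N_finite_rank:
  assumes tf: "torsion_free M" and fr: "finite_rank M" and fin: "finite (rcosets\<^bsub>G\<^esub> G0)"
  shows "finite_rank N"
proof -
  from fr obtain n where n: "\<And>S. Z_independent M S \<Longrightarrow> finite S \<and> card S \<le> n"
    unfolding finite_rank_def finite_torsion_free_rank_def by blast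
  have rM: "rkS M (carrier M) n" unfolding rkS_def using n by blast
  have "rkS N (carrier N) (n * card (rcosets\<^bsub>G\<^esub> G0))"
    using NC_props[OF rM fin] NC_all by simp
  hence rN: "\<And>T. T \<subseteq> carrier N \<Longrightarrow> Z_independent N T \<Longrightarrow> finite T \<and> card T \<le> n * card (rcosets\<^bsub>G\<^esub> G0)"
    unfolding rkS_def by blast
  have ftf: "finite_torsion_free_rank N"
    unfolding finite_torsion_free_rank_def
  proof (intro exI allI impI)
    fix T assume T: "Z_independent N T"
    hence "T \<subseteq> carrier N" unfolding Z_independent_def by (rule conjunct1)
    thus "finite T \<and> card T \<le> n * card (rcosets\<^bsub>G\<^esub> G0)" using rN T by blast
  qed
  have tN: "torsion_free N" by (rule N_torsion_free[OF tf])
  have "finite_p_rank N p" if p: "Factorial_Ring.prime p" for p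
  proof -
    have p0: "p > 0" using p prime_gt_0_nat by blast
    have "{x \<in> carrier N. x [^]\<^bsub>N\<^esub> p = \<one>\<^bsub>N\<^esub>} \<subseteq> {\<one>\<^bsub>N\<^esub>}"
    proof
      fix x assume x: "x \<in> {x \<in> carrier N. x [^]\<^bsub>N\<^esub> p = \<one>\<^bsub>N\<^esub>}"
      have "x = \<one>\<^bsub>N\<^esub>"
        using tN[unfolded torsion_free_def, rule_format, of x p] x p0 by blast
      thus "x \<in> {\<one>\<^bsub>N\<^esub>}" by simp
    qed
    thus ?thesis unfolding finite_p_rank_def by (rule finite_subset) simp
  qed
  thus ?thesis using ftf unfolding finite_rank_def by blast
qed

lemma N_pi_spectral:
  assumes sp: "pi_spectral \<pi> M" and fr: "finite_rank M" and fin: "finite (rcosets\<^bsub>G\<^esub> G0)"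
  shows "pi_spectral \<pi> N"
  unfolding pi_spectral_def
proof (intro allI impI)
  fix p assume a: "Factorial_Ring.prime p \<and> has_prufer_section N p"
  from fr obtain n where n: "\<And>S. Z_independent M S \<Longrightarrow> finite S \<and> card S \<le> n"
    unfolding finite_rank_def finite_torsion_free_rank_def by blast
  have rM: "rkS M (carrier M) n" unfolding rkS_def using n by blast
  have "psec N (carrier N) p" using sec_to_psec[OF N_comm_group] a by blast
  hence "psec N (NC (rcosets\<^bsub>G\<^esub> G0)) p" using NC_all by simp
  hence "psec M (carrier M) p" using NC_props[OF rM fin] a by blast
  hence "has_prufer_section M p" using psec_to_sec[OF cgM] by blast
  thus "p \<in> \<pi>" using sp a unfolding pi_spectral_def by blast
qed

end


lemma hom_finprod_full:
  assumes G: "comm_group G" and Y: "comm_group Y"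
    and h: "h \<in> hom G Y" and f: "f \<in> I \<rightarrow> carrier G"
  shows "h (finprod G f I) = finprod Y (\<lambda>i. h (f i)) I"
proof -
  have e: "G\<lparr>carrier := carrier G\<rparr> = G" by simp
  have s: "subgroup (carrier G) G" using comm_group.axioms(2)[OF G] group.subgroup_self by blast
  show ?thesis using hom_finprod_sub[OF G Y s _ f] h e by simp
qed

locale epi_ctx = ind_ctx G G0 M actM
  for G :: "'g monoid" and G0 :: "'g set" and M :: "'m monoid" and actM :: "'g \<Rightarrow> 'm \<Rightarrow> 'm" +
  fixes A :: "'a monoid" and actA :: "'g \<Rightarrow> 'a \<Rightarrow> 'a" and f :: "'m \<Rightarrow> 'a"
  assumes modA: "G_module G A actA"
    and epi: "module_epi G0 M actM A actA f"
    and finc: "finite (rcosets\<^bsub>G\<^esub> G0)"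
begin

lemma cgA: "comm_group A" using modA unfolding G_module_def by blast

lemma actA_closed: "g \<in> carrier G \<Longrightarrow> x \<in> carrier A \<Longrightarrow> actA g x \<in> carrier A"
  using modA unfolding G_module_def by simp

lemma actA_mult: "g \<in> carrier G \<Longrightarrow> x \<in> carrier A \<Longrightarrow> y \<in> carrier A \<Longrightarrow>
    actA g (x \<otimes>\<^bsub>A\<^esub> y) = actA g x \<otimes>\<^bsub>A\<^esub> actA g y"
  using modA unfolding G_module_def by simp

lemma actA_id: "x \<in> carrier A \<Longrightarrow> actA \<one>\<^bsub>G\<^esub> x = x"
  using modA unfolding G_module_def by simp

lemma actA_comp: "g \<in> carrier G \<Longrightarrow> h \<in> carrier G \<Longrightarrow> x \<in> carrier A \<Longrightarrow>
    actA (g \<otimes>\<^bsub>G\<^esub> h) x = actA g (actA h x)"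
  using modA unfolding G_module_def by simp

lemma actA_one: "g \<in> carrier G \<Longrightarrow> actA g \<one>\<^bsub>A\<^esub> = \<one>\<^bsub>A\<^esub>"
proof -
  interpret A: comm_group A by (rule cgA)
  assume g: "g \<in> carrier G"
  have "actA g \<one>\<^bsub>A\<^esub> = actA g \<one>\<^bsub>A\<^esub> \<otimes>\<^bsub>A\<^esub> actA g \<one>\<^bsub>A\<^esub>"
    using actA_mult[OF g, of "\<one>\<^bsub>A\<^esub>" "\<one>\<^bsub>A\<^esub>"] by simp
  thus ?thesis using actA_closed[OF g A.one_closed]
    by (metis A.l_one A.one_closed A.r_cancel)
qed

lemma actA_hom: "g \<in> carrier G \<Longrightarrow> actA g \<in> hom A A"
  by (rule homI) (auto simp: actA_closed actA_mult)

lemma f_hom: "f \<in> hom M A" using epi unfolding module_epi_def by blast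
lemma f_surj: "f ` carrier M = carrier A" using epi unfolding module_epi_def by blast
lemma f_equi: "g \<in> G0 \<Longrightarrow> x \<in> carrier M \<Longrightarrow> f (actM g x) = actA g (f x)"
  using epi unfolding module_epi_def by blast

lemma f_one: "f \<one>\<^bsub>M\<^esub> = \<one>\<^bsub>A\<^esub>"
proof -
  interpret M: comm_group M by (rule cgM)
  interpret A: comm_group A by (rule cgA)
  interpret fh: group_hom M A f
    using M.is_group A.is_group f_hom unfolding group_hom_def group_hom_axioms_def by blast
  show ?thesis by (rule fh.hom_one)
qed

lemma actM_id: "x \<in> carrier M \<Longrightarrow> actM \<one>\<^bsub>G\<^esub> x = x"
  using modM unfolding G_module_def by simp

lemma actM_comp: "g \<in> G0 \<Longrightarrow> h \<in> G0 \<Longrightarrow> x \<in> carrier M \<Longrightarrow>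
    actM (g \<otimes>\<^bsub>G\<^esub> h) x = actM g (actM h x)"
  using modM unfolding G_module_def by simp

definition actN :: "'g \<Rightarrow> ('g \<Rightarrow> 'm) \<Rightarrow> ('g \<Rightarrow> 'm)" where
  "actN g \<phi> = (\<lambda>x. if x \<in> carrier G then \<phi> (x \<otimes>\<^bsub>G\<^esub> g) else \<one>\<^bsub>M\<^esub>)"

lemma N_G_module: "G_module G N actN"
proof -
  interpret G: group G by (rule grpG)
  interpret M: comm_group M by (rule cgM)
  have s0: "G0 \<subseteq> carrier G" using subgroup.subset[OF sub0] .
  show ?thesis unfolding G_module_def
  proof (intro conjI ballI)
    show "group G" by (rule grpG)
    show "comm_group N" by (rule N_comm_group)
  next
    fix g \<phi> assume g: "g \<in> carrier G" and \<phi>: "\<phi> \<in> carrier N"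
    have \<phi>1: "\<And>x. \<phi> x \<in> carrier M" and \<phi>3: "\<And>h x. h \<in> G0 \<Longrightarrow> x \<in> carrier G \<Longrightarrow> \<phi> (h \<otimes>\<^bsub>G\<^esub> x) = actM h (\<phi> x)"
      using \<phi> unfolding N_carrier by auto
    show "actN g \<phi> \<in> carrier N"
      unfolding N_carrier actN_def
    proof (intro conjI allI ballI impI)
      fix x show "(if x \<in> carrier G then \<phi> (x \<otimes>\<^bsub>G\<^esub> g) else \<one>\<^bsub>M\<^esub>) \<in> carrier M" using \<phi>1 by simp
    next
      fix x assume "x \<notin> carrier G"
      thus "(if x \<in> carrier G then \<phi> (x \<otimes>\<^bsub>G\<^esub> g) else \<one>\<^bsub>M\<^esub>) = \<one>\<^bsub>M\<^esub>" by simp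
    next
      fix h x assume h: "h \<in> G0" and x: "x \<in> carrier G"
      have hc: "h \<in> carrier G" using h s0 by auto
      have "\<phi> ((h \<otimes>\<^bsub>G\<^esub> x) \<otimes>\<^bsub>G\<^esub> g) = \<phi> (h \<otimes>\<^bsub>G\<^esub> (x \<otimes>\<^bsub>G\<^esub> g))" using hc x g by (simp add: G.m_assoc)
      also have "\<dots> = actM h (\<phi> (x \<otimes>\<^bsub>G\<^esub> g))" using \<phi>3[OF h] x g by simp
      finally show "(if h \<otimes>\<^bsub>G\<^esub> x \<in> carrier G then \<phi> ((h \<otimes>\<^bsub>G\<^esub> x) \<otimes>\<^bsub>G\<^esub> g) else \<one>\<^bsub>M\<^esub>) =
          actM h (if x \<in> carrier G then \<phi> (x \<otimes>\<^bsub>G\<^esub> g) else \<one>\<^bsub>M\<^esub>)" using hc x by simp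
    qed
  next
    fix g \<phi> \<psi> assume g: "g \<in> carrier G" and \<phi>: "\<phi> \<in> carrier N" and \<psi>: "\<psi> \<in> carrier N"
    show "actN g (\<phi> \<otimes>\<^bsub>N\<^esub> \<psi>) = actN g \<phi> \<otimes>\<^bsub>N\<^esub> actN g \<psi>"
      unfolding actN_def N_mult by auto
  next
    fix \<phi> assume \<phi>: "\<phi> \<in> carrier N"
    show "actN \<one>\<^bsub>G\<^esub> \<phi> = \<phi>"
      using \<phi> unfolding actN_def N_carrier by auto
  next
    fix g h \<phi> assume g: "g \<in> carrier G" and h: "h \<in> carrier G" and \<phi>: "\<phi> \<in> carrier N"
    show "actN (g \<otimes>\<^bsub>G\<^esub> h) \<phi> = actN g (actN h \<phi>)"
      unfolding actN_def using g h by (auto simp: G.m_assoc)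
  qed
qed

end


context epi_ctx
begin

definition trm :: "('g \<Rightarrow> 'm) \<Rightarrow> 'g \<Rightarrow> 'a" where
  "trm \<phi> t = actA (inv\<^bsub>G\<^esub> t) (f (\<phi> t))"

definition rep :: "'g set \<Rightarrow> 'g" where
  "rep c = (SOME t. t \<in> c)"

definition Phi :: "('g \<Rightarrow> 'm) \<Rightarrow> 'a" where
  "Phi \<phi> = finprod A (\<lambda>c. trm \<phi> (rep c)) (rcosets\<^bsub>G\<^esub> G0)"

lemma s0: "G0 \<subseteq> carrier G" using subgroup.subset[OF sub0] .

lemma f_closed: "x \<in> carrier M \<Longrightarrow> f x \<in> carrier A"
  using f_hom by (auto simp: hom_def)

lemma Nval: "\<phi> \<in> carrier N \<Longrightarrow> \<phi> x \<in> carrier M"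
  unfolding N_carrier by blast

lemma Nequi: "\<phi> \<in> carrier N \<Longrightarrow> h \<in> G0 \<Longrightarrow> x \<in> carrier G \<Longrightarrow> \<phi> (h \<otimes>\<^bsub>G\<^esub> x) = actM h (\<phi> x)"
  unfolding N_carrier by blast

lemma trm_closed: "\<phi> \<in> carrier N \<Longrightarrow> t \<in> carrier G \<Longrightarrow> trm \<phi> t \<in> carrier A"
  unfolding trm_def using grpG by (auto intro!: actA_closed f_closed Nval group.inv_closed)

lemma trm_shift:
  assumes \<phi>: "\<phi> \<in> carrier N" and h: "h \<in> G0" and t: "t \<in> carrier G"
  shows "trm \<phi> (h \<otimes>\<^bsub>G\<^esub> t) = trm \<phi> t"
proof -
  interpret G: group G by (rule grpG)
  have hc: "h \<in> carrier G" using h s0 by auto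
  have "trm \<phi> (h \<otimes>\<^bsub>G\<^esub> t) = actA (inv\<^bsub>G\<^esub> (h \<otimes>\<^bsub>G\<^esub> t)) (f (actM h (\<phi> t)))"
    unfolding trm_def using Nequi[OF \<phi> h t] by simp
  also have "\<dots> = actA (inv\<^bsub>G\<^esub> (h \<otimes>\<^bsub>G\<^esub> t)) (actA h (f (\<phi> t)))"
    using f_equi[OF h Nval[OF \<phi>]] by simp
  also have "\<dots> = actA (inv\<^bsub>G\<^esub> (h \<otimes>\<^bsub>G\<^esub> t) \<otimes>\<^bsub>G\<^esub> h) (f (\<phi> t))"
    using actA_comp[of "inv\<^bsub>G\<^esub> (h \<otimes>\<^bsub>G\<^esub> t)" h "f (\<phi> t)"] hc t f_closed[OF Nval[OF \<phi>]] by simp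
  also have "inv\<^bsub>G\<^esub> (h \<otimes>\<^bsub>G\<^esub> t) \<otimes>\<^bsub>G\<^esub> h = inv\<^bsub>G\<^esub> t"
    using hc t by (simp add: G.inv_mult_group G.m_assoc)
  finally show ?thesis unfolding trm_def .
qed

lemma rcos_elem:
  assumes c: "c \<in> rcosets\<^bsub>G\<^esub> G0" and t: "t \<in> c"
  obtains a h where "a \<in> carrier G" "c = G0 #>\<^bsub>G\<^esub> a" "h \<in> G0" "t = h \<otimes>\<^bsub>G\<^esub> a"
  using c t unfolding RCOSETS_def r_coset_def by blast

lemma rcos_sub: "c \<in> rcosets\<^bsub>G\<^esub> G0 \<Longrightarrow> c \<subseteq> carrier G"
proof
  interpret G: group G by (rule grpG)
  fix t assume c: "c \<in> rcosets\<^bsub>G\<^esub> G0" and t: "t \<in> c"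
  obtain a h where "a \<in> carrier G" "c = G0 #>\<^bsub>G\<^esub> a" "h \<in> G0" "t = h \<otimes>\<^bsub>G\<^esub> a"
    using rcos_elem[OF c t] by blast
  thus "t \<in> carrier G" using s0 by auto
qed

lemma trm_coset:
  assumes \<phi>: "\<phi> \<in> carrier N" and c: "c \<in> rcosets\<^bsub>G\<^esub> G0" and t: "t \<in> c" and t': "t' \<in> c"
  shows "trm \<phi> t = trm \<phi> t'"
proof -
  obtain a h where a: "a \<in> carrier G" "c = G0 #>\<^bsub>G\<^esub> a" "h \<in> G0" "t = h \<otimes>\<^bsub>G\<^esub> a"
    using rcos_elem[OF c t] by blast
  obtain h' where h': "h' \<in> G0" "t' = h' \<otimes>\<^bsub>G\<^esub> a"
    using t' a(2) unfolding r_coset_def by blast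
  show ?thesis using trm_shift[OF \<phi> a(3) a(1)] trm_shift[OF \<phi> h'(1) a(1)] a h' by simp
qed

lemma rep_in: "c \<in> rcosets\<^bsub>G\<^esub> G0 \<Longrightarrow> rep c \<in> c"
proof -
  assume c: "c \<in> rcosets\<^bsub>G\<^esub> G0"
  then obtain a where a: "a \<in> carrier G" "c = G0 #>\<^bsub>G\<^esub> a" unfolding RCOSETS_def by blast
  have "a \<in> c" using group.rcos_self[OF grpG a(1) sub0] a(2) by simp
  thus ?thesis unfolding rep_def by (rule someI)
qed

lemma Phi_hom: "Phi \<in> hom N A"
proof (rule homI)
  interpret A: comm_group A by (rule cgA)
  fix \<phi> assume \<phi>: "\<phi> \<in> carrier N"
  show "Phi \<phi> \<in> carrier A" unfolding Phi_def
    by (rule A.finprod_closed) (use \<phi> rep_in rcos_sub trm_closed in blast)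
next
  interpret A: comm_group A by (rule cgA)
  interpret M: comm_group M by (rule cgM)
  fix \<phi> \<psi> assume \<phi>: "\<phi> \<in> carrier N" and \<psi>: "\<psi> \<in> carrier N"
  have pq: "\<phi> \<otimes>\<^bsub>N\<^esub> \<psi> \<in> carrier N" using N_comm_group \<phi> \<psi> by (simp add: comm_group.axioms(2) group.is_monoid monoid.m_closed del: N_mult)
  have tm: "trm (\<phi> \<otimes>\<^bsub>N\<^esub> \<psi>) t = trm \<phi> t \<otimes>\<^bsub>A\<^esub> trm \<psi> t" if t: "t \<in> carrier G" for t
  proof -
    have it: "inv\<^bsub>G\<^esub> t \<in> carrier G" using group.inv_closed[OF grpG t] .
    have "f (\<phi> t \<otimes>\<^bsub>M\<^esub> \<psi> t) = f (\<phi> t) \<otimes>\<^bsub>A\<^esub> f (\<psi> t)"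
      using hom_mult[OF f_hom Nval[OF \<phi>] Nval[OF \<psi>]] .
    thus ?thesis unfolding trm_def N_mult
      using actA_mult[OF it f_closed[OF Nval[OF \<phi>]] f_closed[OF Nval[OF \<psi>]]] by simp
  qed
  have c1: "(\<lambda>c. trm \<phi> (rep c)) \<in> rcosets\<^bsub>G\<^esub> G0 \<rightarrow> carrier A"
    using \<phi> rep_in rcos_sub trm_closed by blast
  have c2: "(\<lambda>c. trm \<psi> (rep c)) \<in> rcosets\<^bsub>G\<^esub> G0 \<rightarrow> carrier A"
    using \<psi> rep_in rcos_sub trm_closed by blast
  have "Phi (\<phi> \<otimes>\<^bsub>N\<^esub> \<psi>) = finprod A (\<lambda>c. trm \<phi> (rep c) \<otimes>\<^bsub>A\<^esub> trm \<psi> (rep c)) (rcosets\<^bsub>G\<^esub> G0)"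
    unfolding Phi_def
    by (rule A.finprod_cong') (use tm rep_in rcos_sub c1 c2 in \<open>auto simp del: N_mult\<close>)
  also have "\<dots> = Phi \<phi> \<otimes>\<^bsub>A\<^esub> Phi \<psi>" unfolding Phi_def using A.finprod_multf[OF c1 c2] .
  finally show "Phi (\<phi> \<otimes>\<^bsub>N\<^esub> \<psi>) = Phi \<phi> \<otimes>\<^bsub>A\<^esub> Phi \<psi>" .
qed

end


context epi_ctx
begin

lemma Phi_surj: "Phi ` carrier N = carrier A"
proof
  show "Phi ` carrier N \<subseteq> carrier A" using Phi_hom by (auto simp: hom_def)
next
  interpret G: group G by (rule grpG)
  interpret M: comm_group M by (rule cgM)
  interpret A: comm_group A by (rule cgA)
  show "carrier A \<subseteq> Phi ` carrier N"
  proof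
    fix a assume a: "a \<in> carrier A"
    have "a \<in> f ` carrier M" using f_surj a by simp
    then obtain m where m: "m \<in> carrier M" "f m = a" by (elim imageE) simp
    define \<phi>0 where "\<phi>0 = (\<lambda>x. if x \<in> G0 then actM x m else \<one>\<^bsub>M\<^esub>)"
    have \<phi>0N: "\<phi>0 \<in> carrier N"
      unfolding N_carrier
    proof (intro conjI allI ballI impI)
      fix x show "\<phi>0 x \<in> carrier M" unfolding \<phi>0_def using actM_closed m by simp
    next
      fix x assume "x \<notin> carrier G" thus "\<phi>0 x = \<one>\<^bsub>M\<^esub>" using s0 unfolding \<phi>0_def by auto
    next
      fix h x assume h: "h \<in> G0" and x: "x \<in> carrier G"
      have hc: "h \<in> carrier G" using h s0 by auto
      show "\<phi>0 (h \<otimes>\<^bsub>G\<^esub> x) = actM h (\<phi>0 x)"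
      proof (cases "x \<in> G0")
        case True
        hence "h \<otimes>\<^bsub>G\<^esub> x \<in> G0" using subgroup.m_closed[OF sub0 h] by simp
        thus ?thesis unfolding \<phi>0_def using True actM_comp[OF h True m(1)] by simp
      next
        case False
        have "h \<otimes>\<^bsub>G\<^esub> x \<notin> G0"
        proof
          assume hx: "h \<otimes>\<^bsub>G\<^esub> x \<in> G0"
          have "inv\<^bsub>G\<^esub> h \<otimes>\<^bsub>G\<^esub> (h \<otimes>\<^bsub>G\<^esub> x) \<in> G0"
            using subgroup.m_closed[OF sub0 subgroup.m_inv_closed[OF sub0 h] hx] .
          hence "x \<in> G0" using hc x by (simp add: G.m_assoc[symmetric])
          thus False using False by simp
        qed
        thus ?thesis unfolding \<phi>0_def using False actM_one[OF h] by simp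
      qed
    qed
    have G0r: "G0 \<in> rcosets\<^bsub>G\<^esub> G0"
      using G.rcosetsI[OF s0 G.one_closed] G.coset_mult_one[OF s0] by simp
    have tz: "trm \<phi>0 (rep c) = \<one>\<^bsub>A\<^esub>" if c: "c \<in> rcosets\<^bsub>G\<^esub> G0" "c \<noteq> G0" for c
    proof -
      have rc: "rep c \<in> c" using rep_in[OF c(1)] .
      have rG: "rep c \<in> carrier G" using rc rcos_sub[OF c(1)] by auto
      have "rep c \<notin> G0"
      proof
        assume "rep c \<in> G0"
        hence "\<not> disjnt c G0" using rc by (auto simp: disjnt_def)
        thus False using G.rcos_disjoint[OF sub0] c G0r unfolding pairwise_def by blast
      qed
      hence "\<phi>0 (rep c) = \<one>\<^bsub>M\<^esub>" unfolding \<phi>0_def by simp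
      thus ?thesis unfolding trm_def using f_one actA_one[OF G.inv_closed[OF rG]] by simp
    qed
    have t1: "trm \<phi>0 (rep G0) = a"
    proof -
      have "trm \<phi>0 (rep G0) = trm \<phi>0 \<one>\<^bsub>G\<^esub>"
        by (rule trm_coset[OF \<phi>0N G0r rep_in[OF G0r]]) (use subgroup.one_closed[OF sub0] in simp)
      also have "\<dots> = a" unfolding trm_def \<phi>0_def
        using subgroup.one_closed[OF sub0] actM_id[OF m(1)] actA_id[OF a] m by simp
      finally show ?thesis .
    qed
    have c1: "(\<lambda>c. trm \<phi>0 (rep c)) \<in> rcosets\<^bsub>G\<^esub> G0 \<rightarrow> carrier A"
      using \<phi>0N rep_in rcos_sub trm_closed by blast
    have "Phi \<phi>0 = finprod A (\<lambda>c. trm \<phi>0 (rep c)) {G0}"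
      unfolding Phi_def
      by (rule A.finprod_mono_neutral_cong_right) (use finc G0r tz c1 in auto)
    also have "\<dots> = a" using t1 a by simp
    finally show "a \<in> Phi ` carrier N" using \<phi>0N by (metis image_eqI)
  qed
qed

lemma Phi_equi:
  assumes g: "g \<in> carrier G" and \<phi>: "\<phi> \<in> carrier N"
  shows "Phi (actN g \<phi>) = actA g (Phi \<phi>)"
proof -
  interpret G: group G by (rule grpG)
  interpret A: comm_group A by (rule cgA)
  define T where "T = (\<lambda>d. trm \<phi> (rep d))"
  define sh where "sh = (\<lambda>c. c #>\<^bsub>G\<^esub> g)"
  have shr: "sh c \<in> rcosets\<^bsub>G\<^esub> G0" if c: "c \<in> rcosets\<^bsub>G\<^esub> G0" for c
  proof -
    obtain a where a: "a \<in> carrier G" "c = G0 #>\<^bsub>G\<^esub> a" using c unfolding RCOSETS_def by blast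
    have "sh c = G0 #>\<^bsub>G\<^esub> (a \<otimes>\<^bsub>G\<^esub> g)" unfolding sh_def a(2) using G.coset_mult_assoc[OF s0 a(1) g] .
    thus ?thesis using G.rcosetsI[OF s0 G.m_closed[OF a(1) g]] by simp
  qed
  have shinv: "sh c #>\<^bsub>G\<^esub> inv\<^bsub>G\<^esub> g = c" if c: "c \<in> rcosets\<^bsub>G\<^esub> G0" for c
    unfolding sh_def using G.coset_mult_assoc[OF rcos_sub[OF c] g G.inv_closed[OF g]] g rcos_sub[OF c]
    by simp
  have shimg: "sh ` (rcosets\<^bsub>G\<^esub> G0) = rcosets\<^bsub>G\<^esub> G0"
  proof
    show "sh ` (rcosets\<^bsub>G\<^esub> G0) \<subseteq> rcosets\<^bsub>G\<^esub> G0" using shr by auto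
  next
    show "rcosets\<^bsub>G\<^esub> G0 \<subseteq> sh ` (rcosets\<^bsub>G\<^esub> G0)"
    proof
      fix d assume d: "d \<in> rcosets\<^bsub>G\<^esub> G0"
      obtain a where a: "a \<in> carrier G" "d = G0 #>\<^bsub>G\<^esub> a" using d unfolding RCOSETS_def by blast
      define c where "c = G0 #>\<^bsub>G\<^esub> (a \<otimes>\<^bsub>G\<^esub> inv\<^bsub>G\<^esub> g)"
      have cr: "c \<in> rcosets\<^bsub>G\<^esub> G0" unfolding c_def
        using G.rcosetsI[OF s0 G.m_closed[OF a(1) G.inv_closed[OF g]]] .
      have "sh c = G0 #>\<^bsub>G\<^esub> (a \<otimes>\<^bsub>G\<^esub> inv\<^bsub>G\<^esub> g \<otimes>\<^bsub>G\<^esub> g)"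
        unfolding sh_def c_def using G.coset_mult_assoc[OF s0 G.m_closed[OF a(1) G.inv_closed[OF g]] g] .
      also have "a \<otimes>\<^bsub>G\<^esub> inv\<^bsub>G\<^esub> g \<otimes>\<^bsub>G\<^esub> g = a" using a(1) g by (simp add: G.m_assoc)
      finally have "sh c = d" using a(2) by simp
      thus "d \<in> sh ` (rcosets\<^bsub>G\<^esub> G0)" using cr by blast
    qed
  qed
  have shinj: "inj_on sh (rcosets\<^bsub>G\<^esub> G0)"
    by (rule inj_onI) (metis shinv)
  have Tc: "T \<in> rcosets\<^bsub>G\<^esub> G0 \<rightarrow> carrier A"
    unfolding T_def using \<phi> rep_in rcos_sub trm_closed by blast
  have step: "trm (actN g \<phi>) (rep c) = actA g (T (sh c))" if c: "c \<in> rcosets\<^bsub>G\<^esub> G0" for c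
  proof -
    define t where "t = rep c"
    have tc: "t \<in> c" unfolding t_def using rep_in[OF c] .
    have tG: "t \<in> carrier G" using tc rcos_sub[OF c] by auto
    have tg: "t \<otimes>\<^bsub>G\<^esub> g \<in> sh c" unfolding sh_def r_coset_def using tc by blast
    have tgG: "t \<otimes>\<^bsub>G\<^esub> g \<in> carrier G" using G.m_closed[OF tG g] .
    have "T (sh c) = trm \<phi> (t \<otimes>\<^bsub>G\<^esub> g)"
      unfolding T_def by (rule trm_coset[OF \<phi> shr[OF c] rep_in[OF shr[OF c]] tg])
    hence "actA g (T (sh c)) = actA g (actA (inv\<^bsub>G\<^esub> (t \<otimes>\<^bsub>G\<^esub> g)) (f (\<phi> (t \<otimes>\<^bsub>G\<^esub> g))))"
      unfolding trm_def by simp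
    also have "\<dots> = actA (g \<otimes>\<^bsub>G\<^esub> inv\<^bsub>G\<^esub> (t \<otimes>\<^bsub>G\<^esub> g)) (f (\<phi> (t \<otimes>\<^bsub>G\<^esub> g)))"
      using actA_comp[OF g G.inv_closed[OF tgG] f_closed[OF Nval[OF \<phi>]]] by simp
    also have "g \<otimes>\<^bsub>G\<^esub> inv\<^bsub>G\<^esub> (t \<otimes>\<^bsub>G\<^esub> g) = inv\<^bsub>G\<^esub> t"
      using tG g by (simp add: G.inv_mult_group G.m_assoc[symmetric])
    finally have "actA g (T (sh c)) = actA (inv\<^bsub>G\<^esub> t) (f (\<phi> (t \<otimes>\<^bsub>G\<^esub> g)))" .
    moreover have "trm (actN g \<phi>) t = actA (inv\<^bsub>G\<^esub> t) (f (\<phi> (t \<otimes>\<^bsub>G\<^esub> g)))"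
      unfolding trm_def actN_def using tG by simp
    ultimately show ?thesis unfolding t_def by simp
  qed
  have "Phi (actN g \<phi>) = finprod A (\<lambda>c. actA g (T (sh c))) (rcosets\<^bsub>G\<^esub> G0)"
    unfolding Phi_def
    by (rule A.finprod_cong') (use step Tc shr actA_closed[OF g] in auto)
  also have "\<dots> = actA g (finprod A (\<lambda>c. T (sh c)) (rcosets\<^bsub>G\<^esub> G0))"
    by (rule hom_finprod_full[OF cgA cgA actA_hom[OF g], symmetric]) (use Tc shr in auto)
  also have "finprod A (\<lambda>c. T (sh c)) (rcosets\<^bsub>G\<^esub> G0) = finprod A T (sh ` (rcosets\<^bsub>G\<^esub> G0))"
    by (rule A.finprod_reindex[symmetric]) (use Tc shimg shinj in auto)
  also have "\<dots> = Phi \<phi>" unfolding Phi_def T_def shimg ..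
  finally show ?thesis .
qed

lemma main_exists:
  "\<exists>actN' \<phi>'. G_module G N actN' \<and> module_epi (carrier G) N actN' A actA \<phi>'"
proof (intro exI conjI)
  show "G_module G N actN" by (rule N_G_module)
  show "module_epi (carrier G) N actN A actA Phi"
    unfolding module_epi_def using Phi_hom Phi_surj Phi_equi by blast
qed

end


theorem lemma4p3:
  fixes \<pi> :: "nat set"
    and G :: "'g monoid" and G0 :: "'g set"
    and A :: "'a monoid" and actA :: "'g \<Rightarrow> 'a \<Rightarrow> 'a"
    and M :: "'m monoid" and actM :: "'g \<Rightarrow> 'm \<Rightarrow> 'm" and f :: "'m \<Rightarrow> 'a"
  assumes "\<forall>p\<in>\<pi>. Factorial_Ring.prime p"
    and "group G"
    and "subgroup G0 G"
    and "finite (rcosets\<^bsub>G\<^esub> G0)"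
    and "G_module G A actA"
    and "G_module (G\<lparr>carrier := G0\<rparr>) M actM"
    and "torsion_free M" and "finite_rank M" and "pi_spectral \<pi> M"
    and "module_epi G0 M actM A actA f"
  shows "\<exists>(N :: ('g \<Rightarrow> 'm) monoid) actN \<phi>.
           G_module G N actN \<and> torsion_free N \<and> finite_rank N \<and> pi_spectral \<pi> N \<and>
           module_epi (carrier G) N actN A actA \<phi>"
proof -
  interpret E: epi_ctx G G0 M actM A actA f
  proof -
    have "ind_ctx G G0 M actM" unfolding ind_ctx_def using assms(2,3,6) by (intro conjI)
    moreover have "epi_ctx_axioms G G0 M actM A actA f"
      unfolding epi_ctx_axioms_def using assms(4,5,10) by (intro conjI)
    ultimately show "epi_ctx G G0 M actM A actA f" unfolding epi_ctx_def by (intro conjI)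
  qed
  obtain actN \<phi> where m: "G_module G E.N actN" "module_epi (carrier G) E.N actN A actA \<phi>"
    using E.main_exists by blast
  have "torsion_free E.N" by (rule E.N_torsion_free) (use assms in auto)
  moreover have "finite_rank E.N" by (rule E.N_finite_rank) (use assms in auto)
  moreover have "pi_spectral \<pi> E.N" by (rule E.N_pi_spectral) (use assms in auto)
  ultimately show ?thesis using m by blast
qed


end
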